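(* Let $x_0>0$, $L>0$, and let $\gamma$ be an admissible curve parametrized by arc length. Let $\mathcal V$ be a first-order area-preserving admissible variation of $\gamma$ with velocity $X$ and acceleration $X'$. Then there exists an area-preserving admissible variation $\tilde{\mathcal V}$ of $\gamma$, with velocity $\tilde X$ and acceleration $\tilde X'$, such that $\tilde X=X$ on $[0,2L]$ and $\tilde X'=X'$ on $[0,\frac L2]\cup[\frac{3L}2,2L]$.
   Context: Notation: $(\xi,\eta)^\perp=(\eta,-\xi)$; for a regular curve $\gamma\in C^2([0,2L],\mathbb R^2)$ ($|\dot\gamma|>0$), curvature $H=\langle\dot\gamma,\ddot\gamma^\perp\rangle/|\dot\gamma|^3$, normal $N=\dot\gamma^\perp/|\dot\gamma|$; strictly counterclockwise means $H>0$. A curve $\gamma=(x,y)$ is admissible if $\gamma\in C^\infty([0,2L],\mathbb R^2)$ is regular, strictly counterclockwise, injective, $\gamma(0)=(x_0,0)$, $\gamma(2L)=(-x_0,0)$, $y>0$ on $(0,2L)$. Enclosed area: $\mathcal A(\gamma)=\frac12\int_0^{2L}(x\dot y-\dot x y)\,ds$. An admissible variation is a smooth $\mathcal V:[0,2L]\times[-t_{\mathcal V},t_{\mathcal V}]\to\mathbb R^2$ with $\mathcal V(\cdot,0)=\gamma$ and $\gamma_t=\mathcal V(\cdot,t)$ admissible for all $t$; velocity $X=\partial_t\mathcal V|_{t=0}$, acceleration $X'=\partial_t^2\mathcal V|_{t=0}$. It is area-preserving if $\mathcal A(\gamma_t)=\mathcal A(\gamma)$ for all $t$, and first-order area-preserving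 if $\int_0^{2L}\langle X,N\rangle\,ds=0$ (for arc-length parametrized $\gamma$). *)

theory Defs
  imports "HOL-Analysis.Analysis"
begin

fun Ck_on :: "nat \<Rightarrow> 'a::euclidean_space set \<Rightarrow> ('a \<Rightarrow> 'b::real_normed_vector) \<Rightarrow> bool" where
  "Ck_on 0 U f = continuous_on U f"
| "Ck_on (Suc n) U f =
     (f differentiable_on U \<and> continuous_on U f \<and>
      (\<forall>i\<in>Basis. Ck_on n U (\<lambda>x. frechet_derivative f (at x) i)))"

definition Cinf_on :: "'a::euclidean_space set \<Rightarrow> ('a \<Rightarrow> 'b::real_normed_vector) \<Rightarrow> bool" where
  "Cinf_on U f \<longleftrightarrow> open U \<and> (\<forall>n. Ck_on n U f)"

definition smooth_on_set :: "'a::euclidean_space set \<Rightarrow> ('a \<Rightarrow> 'b::real_normed_vector) \<Rightarrow> bool" where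
  "smooth_on_set S f \<longleftrightarrow> (\<exists>U g. open U \<and> S \<subseteq> U \<and> Cinf_on U g \<and> (\<forall>x\<in>S. g x = f x))"

definition perp :: "real \<times> real \<Rightarrow> real \<times> real" where
  "perp v = (snd v, - fst v)"

definition d1 :: "real \<Rightarrow> (real \<Rightarrow> real \<times> real) \<Rightarrow> real \<Rightarrow> real \<times> real" where
  "d1 L \<gamma> s = vector_derivative \<gamma> (at s within {0..2*L})"

definition d2 :: "real \<Rightarrow> (real \<Rightarrow> real \<times> real) \<Rightarrow> real \<Rightarrow> real \<times> real" where
  "d2 L \<gamma> s = vector_derivative (d1 L \<gamma>) (at s within {0..2*L})"

definition curvature :: "real \<Rightarrow> (real \<Rightarrow> real \<times> real) \<Rightarrow> real \<Rightarrow> real" where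
  "curvature L \<gamma> s = inner (d1 L \<gamma> s) (perp (d2 L \<gamma> s)) / norm (d1 L \<gamma> s) ^ 3"

definition normal :: "real \<Rightarrow> (real \<Rightarrow> real \<times> real) \<Rightarrow> real \<Rightarrow> real \<times> real" where
  "normal L \<gamma> s = inverse (norm (d1 L \<gamma> s)) *\<^sub>R perp (d1 L \<gamma> s)"

definition admissible :: "real \<Rightarrow> real \<Rightarrow> (real \<Rightarrow> real \<times> real) \<Rightarrow> bool" where
  "admissible L x0 \<gamma> \<longleftrightarrow>
     smooth_on_set {0..2*L} \<gamma> \<and>
     (\<forall>s\<in>{0..2*L}. d1 L \<gamma> s \<noteq> 0) \<and>
     (\<forall>s\<in>{0..2*L}. curvature L \<gamma> s > 0) \<and>
     inj_on \<gamma> {0..2*L} \<and>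
     \<gamma> 0 = (x0, 0) \<and> \<gamma> (2*L) = (-x0, 0) \<and>
     (\<forall>s\<in>{0<..<2*L}. snd (\<gamma> s) > 0)"

definition arclength_param :: "real \<Rightarrow> (real \<Rightarrow> real \<times> real) \<Rightarrow> bool" where
  "arclength_param L \<gamma> \<longleftrightarrow> (\<forall>s\<in>{0..2*L}. norm (d1 L \<gamma> s) = 1)"

definition area :: "real \<Rightarrow> (real \<Rightarrow> real \<times> real) \<Rightarrow> real" where
  "area L \<gamma> = (1/2) * integral {0..2*L}
     (\<lambda>s. fst (\<gamma> s) * snd (d1 L \<gamma> s) - fst (d1 L \<gamma> s) * snd (\<gamma> s))"

definition admissible_variation ::
  "real \<Rightarrow> real \<Rightarrow> (real \<Rightarrow> real \<times> real) \<Rightarrow> (real \<times> real \<Rightarrow> real \<times> real) \<Rightarrow> real \<Rightarrow> bool" where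
  "admissible_variation L x0 \<gamma> V tV \<longleftrightarrow>
     tV > 0 \<and>
     smooth_on_set ({0..2*L} \<times> {-tV..tV}) V \<and>
     (\<forall>s\<in>{0..2*L}. V (s, 0) = \<gamma> s) \<and>
     (\<forall>t\<in>{-tV..tV}. admissible L x0 (\<lambda>s. V (s, t)))"

definition velocity :: "(real \<times> real \<Rightarrow> real \<times> real) \<Rightarrow> real \<Rightarrow> real \<Rightarrow> real \<times> real" where
  "velocity V tV s = vector_derivative (\<lambda>t. V (s, t)) (at 0 within {-tV..tV})"

definition acceleration :: "(real \<times> real \<Rightarrow> real \<times> real) \<Rightarrow> real \<Rightarrow> real \<Rightarrow> real \<times> real" where
  "acceleration V tV s =
     vector_derivative (\<lambda>t. vector_derivative (\<lambda>\<tau>. V (s, \<tau>)) (at t within {-tV..tV}))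
       (at 0 within {-tV..tV})"

definition area_preserving :: "real \<Rightarrow> (real \<Rightarrow> real \<times> real) \<Rightarrow> (real \<times> real \<Rightarrow> real \<times> real) \<Rightarrow> real \<Rightarrow> bool" where
  "area_preserving L \<gamma> V tV \<longleftrightarrow> (\<forall>t\<in>{-tV..tV}. area L (\<lambda>s. V (s, t)) = area L \<gamma>)"

definition first_order_area_preserving ::
  "real \<Rightarrow> (real \<Rightarrow> real \<times> real) \<Rightarrow> (real \<times> real \<Rightarrow> real \<times> real) \<Rightarrow> real \<Rightarrow> bool" where
  "first_order_area_preserving L \<gamma> V tV \<longleftrightarrow>
     integral {0..2*L} (\<lambda>s. inner (velocity V tV s) (normal L \<gamma> s)) = 0"

end

theory Submission
  imports Defs
begin

lemma Ck_cont: "Ck_on n U f \<Longrightarrow> continuous_on U f"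
  by (cases n) auto

lemma Ck_mono: "Ck_on (Suc n) U f \<Longrightarrow> Ck_on n U f"
proof (induction n arbitrary: f)
  case 0 then show ?case by auto
next
  case (Suc n) then show ?case by (metis Ck_on.simps(2))
qed

lemma Ck_mono_add: "Ck_on (k + n) U f \<Longrightarrow> Ck_on n U f"
  by (induction k) (auto dest: Ck_mono simp del: Ck_on.simps)

lemma Ck_mono_le: "m \<le> n \<Longrightarrow> Ck_on n U f \<Longrightarrow> Ck_on m U f"
  by (metis Ck_mono_add le_add_diff_inverse2)

lemma Ck_subset: "Ck_on n U f \<Longrightarrow> open V \<Longrightarrow> V \<subseteq> U \<Longrightarrow> Ck_on n V f"
proof (induction n arbitrary: f)
  case 0 then show ?case by (auto intro: continuous_on_subset)
next
  case (Suc n)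
  have "f differentiable_on V" using Suc.prems differentiable_on_subset by (metis Ck_on.simps(2))
  moreover have "continuous_on V f" using Suc.prems continuous_on_subset by (metis Ck_on.simps(2))
  moreover have "\<forall>i\<in>Basis. Ck_on n V (\<lambda>x. frechet_derivative f (at x) i)"
    using Suc.prems Suc.IH by simp
  ultimately show ?case by simp
qed

lemma Ck_cong: "open U \<Longrightarrow> (\<And>x. x \<in> U \<Longrightarrow> f x = g x) \<Longrightarrow> Ck_on n U f \<Longrightarrow> Ck_on n U g"
proof (induction n arbitrary: f g)
  case 0 then show ?case using continuous_on_cong by force
next
  case (Suc n)
  have d: "f differentiable_on U" "continuous_on U f" and ck: "\<And>i. i\<in>Basis \<Longrightarrow> Ck_on n U (\<lambda>x. frechet_derivative f (at x) i)"
    using Suc.prems by auto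
  have fd: "frechet_derivative f (at x) = frechet_derivative g (at x)" if "x \<in> U" for x
  proof (rule frechet_derivative_transform_within_open[OF _ \<open>open U\<close> that])
    show "f differentiable at x" using d(1) that \<open>open U\<close> differentiable_on_eq_differentiable_at by blast
    show "\<And>y. y \<in> U \<Longrightarrow> f y = g y" by (rule Suc.prems(2))
  qed
  have "g differentiable_on U"
    unfolding differentiable_on_def
  proof
    fix x assume "x \<in> U"
    then have "f differentiable at x" using d(1) \<open>open U\<close> differentiable_on_eq_differentiable_at by blast
    then obtain D where "(f has_derivative D) (at x)" unfolding differentiable_def by blast
    then have "(g has_derivative D) (at x)"
      by (rule has_derivative_transform_within_open[OF _ \<open>open U\<close> \<open>x \<in> U\<close>]) (simp add: Suc.prems(2))
    then have "g differentiable at x" unfolding differentiable_def by blast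
    then show "g differentiable at x within U" by (rule differentiable_at_withinI)
  qed
  moreover have "continuous_on U g" using d(2) Suc.prems(2) continuous_on_cong by blast
  moreover have "Ck_on n U (\<lambda>x. frechet_derivative g (at x) i)" if "i \<in> Basis" for i
    by (rule Suc.IH[OF \<open>open U\<close> _ ck[OF that]]) (simp add: fd)
  ultimately show ?case by simp
qed

lemma Ck_SucI:
  assumes "open U" "\<And>x. x \<in> U \<Longrightarrow> (f has_derivative F x) (at x)"
    "\<And>i. i \<in> Basis \<Longrightarrow> Ck_on n U (\<lambda>x. F x i)"
  shows "Ck_on (Suc n) U f"
proof -
  have "f differentiable_on U" unfolding differentiable_on_def
  proof
    fix x assume "x \<in> U"
    then have "f differentiable at x" using assms(2) differentiableI by blast
    then show "f differentiable at x within U" by (rule differentiable_at_withinI)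
  qed
  moreover have "continuous_on U f"
  proof (rule continuous_at_imp_continuous_on, rule ballI)
    fix x assume "x \<in> U"
    then show "isCont f x" using assms(2) has_derivative_continuous by blast
  qed
  moreover have "Ck_on n U (\<lambda>x. frechet_derivative f (at x) i)" if "i \<in> Basis" for i
  proof (rule Ck_cong[OF \<open>open U\<close> _ assms(3)[OF that]])
    fix x assume "x \<in> U"
    then have "F x = frechet_derivative f (at x)" using assms(2) frechet_derivative_at by blast
    then show "F x i = frechet_derivative f (at x) i" by simp
  qed
  ultimately show ?thesis by simp
qed

lemma Ck_SucD1:
  assumes "open U" "Ck_on (Suc n) U f" "x \<in> U"
  shows "(f has_derivative frechet_derivative f (at x)) (at x)"
proof -
  have "f differentiable_on U" using assms(2) by simp
  then have "f differentiable at x" using assms(1,3) differentiable_on_eq_differentiable_at by blast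
  then show ?thesis using frechet_derivative_works by blast
qed

lemma Ck_SucD2:
  assumes "Ck_on (Suc n) U f" "i \<in> Basis"
  shows "Ck_on n U (\<lambda>x. frechet_derivative f (at x) i)"
  using assms by simp

lemmas Ck_SucD = Ck_SucD1 Ck_SucD2

lemma Ck_const: "Ck_on n U (\<lambda>x. c)"
proof (induction n arbitrary: c)
  case 0 then show ?case by simp
next
  case (Suc n) then show ?case by simp
qed

lemma Ck_add: "open U \<Longrightarrow> Ck_on n U f \<Longrightarrow> Ck_on n U g \<Longrightarrow> Ck_on n U (\<lambda>x. f x + g x)"
proof (induction n arbitrary: f g)
  case 0 then show ?case by (auto intro: continuous_on_add)
next
  case (Suc n)
  show ?case
  proof (rule Ck_SucI[OF \<open>open U\<close>])
    fix x assume "x \<in> U"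
    show "((\<lambda>x. f x + g x) has_derivative (\<lambda>h. frechet_derivative f (at x) h + frechet_derivative g (at x) h)) (at x)"
      using Ck_SucD1[OF Suc.prems(1,2) \<open>x \<in> U\<close>] Ck_SucD1[OF Suc.prems(1,3) \<open>x \<in> U\<close>] by (rule has_derivative_add)
  next
    fix i :: 'a assume "i \<in> Basis"
    then show "Ck_on n U (\<lambda>x. frechet_derivative f (at x) i + frechet_derivative g (at x) i)"
      using Suc.IH[OF Suc.prems(1) Ck_SucD2[OF Suc.prems(2) \<open>i \<in> Basis\<close>] Ck_SucD2[OF Suc.prems(3) \<open>i \<in> Basis\<close>]] by blast
  qed
qed

lemma Ck_linear: "open U \<Longrightarrow> bounded_linear l \<Longrightarrow> Ck_on n U f \<Longrightarrow> Ck_on n U (\<lambda>x. l (f x))"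
proof (induction n arbitrary: f)
  case 0 then show ?case by (auto intro: bounded_linear.continuous_on)
next
  case (Suc n)
  show ?case
  proof (rule Ck_SucI[OF \<open>open U\<close>])
    fix x assume "x \<in> U"
    show "((\<lambda>x. l (f x)) has_derivative (\<lambda>h. l (frechet_derivative f (at x) h))) (at x)"
      using Ck_SucD1[OF Suc.prems(1,3) \<open>x \<in> U\<close>] Suc.prems(2)
      by (rule bounded_linear.has_derivative[rotated])
  next
    fix i :: 'a assume "i \<in> Basis"
    then show "Ck_on n U (\<lambda>x. l (frechet_derivative f (at x) i))"
      using Suc.IH[OF Suc.prems(1,2) Ck_SucD2[OF Suc.prems(3) \<open>i \<in> Basis\<close>]] by blast
  qed
qed

lemma Ck_bilinear:
  fixes prod :: "'b::real_normed_vector \<Rightarrow> 'c::real_normed_vector \<Rightarrow> 'd::real_normed_vector"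
    and U :: "'a::euclidean_space set"
  shows "open U \<Longrightarrow> bounded_bilinear prod \<Longrightarrow> Ck_on n U f \<Longrightarrow> Ck_on n U g \<Longrightarrow> Ck_on n U (\<lambda>x. prod (f x) (g x))"
proof (induction n arbitrary: f g)
  case 0 then show ?case by (auto intro: bounded_bilinear.continuous_on)
next
  case (Suc n)
  show ?case
  proof (rule Ck_SucI[OF \<open>open U\<close>])
    fix x assume "x \<in> U"
    show "((\<lambda>x. prod (f x) (g x)) has_derivative (\<lambda>h. prod (f x) (frechet_derivative g (at x) h) + prod (frechet_derivative f (at x) h) (g x))) (at x)"
      by (rule bounded_bilinear.FDERIV[OF Suc.prems(2) Ck_SucD1[OF Suc.prems(1,3) \<open>x \<in> U\<close>] Ck_SucD1[OF Suc.prems(1,4) \<open>x \<in> U\<close>]])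
  next
    fix i :: 'a assume "i \<in> Basis"
    then show "Ck_on n U (\<lambda>x. prod (f x) (frechet_derivative g (at x) i) + prod (frechet_derivative f (at x) i) (g x))"
      using Suc.IH[OF Suc.prems(1,2) Ck_mono[OF Suc.prems(3)] Ck_SucD2[OF Suc.prems(4) \<open>i \<in> Basis\<close>]]
        Suc.IH[OF Suc.prems(1,2) Ck_SucD2[OF Suc.prems(3) \<open>i \<in> Basis\<close>] Ck_mono[OF Suc.prems(4)]]
      by (intro Ck_add Suc.prems(1))
  qed
qed


lemma Ck_sum: "finite S \<Longrightarrow> open U \<Longrightarrow> (\<And>j. j \<in> S \<Longrightarrow> Ck_on n U (f j)) \<Longrightarrow> Ck_on n U (\<lambda>x. \<Sum>j\<in>S. f j x)"
proof (induction S rule: finite_induct)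
  case empty then show ?case by (simp add: Ck_const)
next
  case (insert a S) then show ?case by (simp add: Ck_add)
qed

lemma Ck_lin_map: assumes "open U" "bounded_linear l" shows "Ck_on n U l"
proof (cases n)
  case 0 then show ?thesis
    using assms by (simp add: linear_continuous_on)
next
  case (Suc m)
  show ?thesis unfolding Suc
  proof (rule Ck_SucI[OF \<open>open U\<close>])
    show "(l has_derivative l) (at x)" for x using \<open>bounded_linear l\<close> by (rule bounded_linear_imp_has_derivative)
    show "Ck_on m U (\<lambda>x. l i)" for i by (rule Ck_const)
  qed
qed

lemma Ck_id: "open U \<Longrightarrow> Ck_on n U (\<lambda>x. x)"
  using Ck_lin_map[of U "\<lambda>x. x"] bounded_linear_ident by simp

lemma Ck_compose:
  assumes "open U" "open V" "\<And>x. x \<in> U \<Longrightarrow> f x \<in> V" "Ck_on n V g" "Ck_on n U f"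
  shows "Ck_on n U (\<lambda>x. g (f x))"
  using assms(4,5)
proof (induction n arbitrary: g)
  case 0
  have "f ` U \<subseteq> V" using assms(3) by (simp add: image_subset_iff)
  then show ?case
    using continuous_on_compose2[of V g U f] 0 by simp
next
  case (Suc n)
  show ?case
  proof (rule Ck_SucI[OF \<open>open U\<close>])
    fix x assume "x \<in> U"
    show "((\<lambda>x. g (f x)) has_derivative (\<lambda>h. frechet_derivative g (at (f x)) (frechet_derivative f (at x) h))) (at x)"
      using diff_chain_at[OF Ck_SucD1[OF assms(1) Suc.prems(2) \<open>x \<in> U\<close>] Ck_SucD1[OF assms(2) Suc.prems(1) assms(3)[OF \<open>x \<in> U\<close>]]]
      by (simp add: o_def)
  next
    fix i :: 'a assume "i \<in> Basis"
    have eq: "frechet_derivative g (at (f x)) (frechet_derivative f (at x) i) =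
       (\<Sum>j\<in>Basis. (frechet_derivative f (at x) i \<bullet> j) *\<^sub>R frechet_derivative g (at (f x)) j)" if "x \<in> U" for x
    proof -
      have lin: "linear (frechet_derivative g (at (f x)))"
        using Ck_SucD1[OF assms(2) Suc.prems(1) assms(3)[OF that]] has_derivative_linear by blast
      have "frechet_derivative g (at (f x)) (frechet_derivative f (at x) i)
          = frechet_derivative g (at (f x)) (\<Sum>j\<in>Basis. (frechet_derivative f (at x) i \<bullet> j) *\<^sub>R j)"
        by (simp add: euclidean_representation)
      also have "\<dots> = (\<Sum>j\<in>Basis. (frechet_derivative f (at x) i \<bullet> j) *\<^sub>R frechet_derivative g (at (f x)) j)"
        using lin by (simp add: linear_sum linear_scale)
      finally show ?thesis .
    qed
    have "Ck_on n U (\<lambda>x. \<Sum>j\<in>Basis. (frechet_derivative f (at x) i \<bullet> j) *\<^sub>R frechet_derivative g (at (f x)) j)"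
    proof (rule Ck_sum[OF finite_Basis assms(1)])
      fix j :: 'b assume "j \<in> Basis"
      have c1: "Ck_on n U (\<lambda>x. frechet_derivative f (at x) i \<bullet> j)"
        using Ck_linear[OF assms(1) bounded_linear_inner_left Ck_SucD2[OF Suc.prems(2) \<open>i \<in> Basis\<close>]] .
      have c2: "Ck_on n U (\<lambda>x. frechet_derivative g (at (f x)) j)"
        using Suc.IH[OF Ck_SucD2[OF Suc.prems(1) \<open>j \<in> Basis\<close>] Ck_mono[OF Suc.prems(2)]] .
      show "Ck_on n U (\<lambda>x. (frechet_derivative f (at x) i \<bullet> j) *\<^sub>R frechet_derivative g (at (f x)) j)"
        using Ck_bilinear[OF assms(1) bounded_bilinear_scaleR c1 c2] .
    qed
    from Ck_cong[OF assms(1) _ this]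
    show "Ck_on n U (\<lambda>x. frechet_derivative g (at (f x)) (frechet_derivative f (at x) i))"
      using eq by simp
  qed
qed

lemma Basis_real_eq: "(i::real) \<in> Basis \<Longrightarrow> i = 1"
  by simp

lemma Ck_inverse_real: "Ck_on n (-{0}) (\<lambda>x::real. inverse x)"
proof (induction n)
  case 0 then show ?case by (simp add: continuous_on_inverse continuous_on_id)
next
  case (Suc n)
  show ?case
  proof (rule Ck_SucI)
    show "open (-{0::real})" by (simp add: open_Compl)
    fix x :: real assume "x \<in> -{0}"
    then show "((\<lambda>x. inverse x) has_derivative (\<lambda>h. - (inverse x * h * inverse x))) (at x)"
      using has_derivative_inverse'[of x UNIV] by simp
  next
    fix i :: real assume "i \<in> Basis"
    then have "i = 1" by simp
    have o: "open (-{0::real})" by (simp add: open_Compl)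
    have "Ck_on n (-{0}) (\<lambda>x::real. inverse x * inverse x)"
      by (rule Ck_bilinear[OF o bounded_bilinear_mult Suc.IH Suc.IH])
    then have "Ck_on n (-{0}) (\<lambda>x::real. - (inverse x * inverse x))"
      by (rule Ck_linear[OF o bounded_linear_minus[OF bounded_linear_ident]])
    then show "Ck_on n (-{0}) (\<lambda>x::real. - (inverse x * i * inverse x))" using \<open>i = 1\<close> by simp
  qed
qed

lemma Ck_exp: "Ck_on n UNIV (\<lambda>x::real. exp x)"
proof (induction n)
  case 0 then show ?case by (simp add: continuous_on_exp continuous_on_id)
next
  case (Suc n)
  show ?case
  proof (rule Ck_SucI)
    fix x :: real
    show "((\<lambda>x. exp x) has_derivative (\<lambda>h. h * exp x)) (at x)"
      using DERIV_exp[of x] by (simp add: has_field_derivative_def mult_commute_abs)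
  next
    fix i :: real assume "i \<in> Basis"
    then show "Ck_on n UNIV (\<lambda>x. i * exp x)" using Suc.IH by simp
  qed simp
qed

lemma Ck_inverse:
  fixes f :: "'a::euclidean_space \<Rightarrow> real"
  assumes "open U" "Ck_on n U f" "\<And>x. x \<in> U \<Longrightarrow> f x \<noteq> 0"
  shows "Ck_on n U (\<lambda>x. inverse (f x))"
  by (rule Ck_compose[OF assms(1) _ _ Ck_inverse_real assms(2)]) (use assms(3) in \<open>auto simp: open_Compl\<close>)


definition Ds :: "(real \<times> real \<Rightarrow> 'c::real_normed_vector) \<Rightarrow> real \<times> real \<Rightarrow> 'c" where
  "Ds f p = frechet_derivative f (at p) (1, 0)"
definition Dt :: "(real \<times> real \<Rightarrow> 'c::real_normed_vector) \<Rightarrow> real \<times> real \<Rightarrow> 'c" where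
  "Dt f p = frechet_derivative f (at p) (0, 1)"
definition D1 :: "(real \<Rightarrow> 'c::real_normed_vector) \<Rightarrow> real \<Rightarrow> 'c" where
  "D1 f x = frechet_derivative f (at x) 1"

lemma Basis_10: "((1::real), (0::real)) \<in> Basis" and Basis_01: "((0::real), (1::real)) \<in> Basis"
  by (auto simp: Basis_prod_def)

lemma Ck_Ds: assumes "Ck_on (Suc n) U f" shows "Ck_on n U (Ds f)"
proof -
  have "Ck_on n U (\<lambda>x. frechet_derivative f (at x) (1,0))" by (rule Ck_SucD2[OF assms Basis_10])
  then show ?thesis unfolding Ds_def[abs_def] .
qed
lemma Ck_Dt: assumes "Ck_on (Suc n) U f" shows "Ck_on n U (Dt f)"
proof -
  have "Ck_on n U (\<lambda>x. frechet_derivative f (at x) (0,1))" by (rule Ck_SucD2[OF assms Basis_01])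
  then show ?thesis unfolding Dt_def[abs_def] .
qed
lemma Ck_D1: assumes "Ck_on (Suc n) U (f :: real \<Rightarrow> 'c::real_normed_vector)" shows "Ck_on n U (D1 f)"
proof -
  have "Ck_on n U (\<lambda>x. frechet_derivative f (at x) 1)" by (rule Ck_SucD2[OF assms]) simp
  then show ?thesis unfolding D1_def[abs_def] .
qed

lemma Cinf_Ds: "(\<And>n. Ck_on n U f) \<Longrightarrow> Ck_on n U (Ds f)"
  by (rule Ck_Ds)
lemma Cinf_Dt: "(\<And>n. Ck_on n U f) \<Longrightarrow> Ck_on n U (Dt f)"
  by (rule Ck_Dt)
lemma Cinf_D1: "(\<And>n. Ck_on n U (f :: real \<Rightarrow> 'c::real_normed_vector)) \<Longrightarrow> Ck_on n U (D1 f)"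
  by (rule Ck_D1)

lemma hvd_s:
  assumes "open U" "Ck_on (Suc n) U f" "(s, t) \<in> U"
  shows "((\<lambda>s. f (s, t)) has_vector_derivative Ds f (s, t)) (at s within S)"
proof -
  have d: "(f has_derivative frechet_derivative f (at (s,t))) (at (s, t))"
    by (rule Ck_SucD1[OF assms])
  have l: "linear (frechet_derivative f (at (s,t)))" using d has_derivative_linear by blast
  have p: "((\<lambda>s. (s, t)) has_derivative (\<lambda>h. (h, 0))) (at s within S)"
    by (auto intro!: derivative_eq_intros)
  have "((\<lambda>s. f (s, t)) has_derivative (\<lambda>h. frechet_derivative f (at (s,t)) (h, 0))) (at s within S)"
    using diff_chain_within[OF p has_derivative_at_withinI[OF d]] by (simp add: o_def)
  moreover have "frechet_derivative f (at (s,t)) (h, 0) = h *\<^sub>R Ds f (s, t)" for h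
  proof -
    have "(h, 0::real) = h *\<^sub>R ((1::real), (0::real))" by simp
    then show ?thesis unfolding Ds_def using linear_cmul[OF l, of h "(1::real, 0::real)"] by simp
  qed
  ultimately show ?thesis unfolding has_vector_derivative_def by simp
qed

lemma hvd_t:
  assumes "open U" "Ck_on (Suc n) U f" "(s, t) \<in> U"
  shows "((\<lambda>t. f (s, t)) has_vector_derivative Dt f (s, t)) (at t within S)"
proof -
  have d: "(f has_derivative frechet_derivative f (at (s,t))) (at (s, t))"
    by (rule Ck_SucD1[OF assms])
  have l: "linear (frechet_derivative f (at (s,t)))" using d has_derivative_linear by blast
  have p: "((\<lambda>t. (s, t)) has_derivative (\<lambda>h. (0, h))) (at t within S)"
    by (auto intro!: derivative_eq_intros)
  have "((\<lambda>t. f (s, t)) has_derivative (\<lambda>h. frechet_derivative f (at (s,t)) (0, h))) (at t within S)"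
    using diff_chain_within[OF p has_derivative_at_withinI[OF d]] by (simp add: o_def)
  moreover have "frechet_derivative f (at (s,t)) (0, h) = h *\<^sub>R Dt f (s, t)" for h
  proof -
    have "(0::real, h) = h *\<^sub>R ((0::real), (1::real))" by simp
    then show ?thesis unfolding Dt_def using linear_cmul[OF l, of h "(0::real, 1::real)"] by simp
  qed
  ultimately show ?thesis unfolding has_vector_derivative_def by simp
qed

lemma hvd_1:
  assumes "open U" "Ck_on (Suc n) U f" "x \<in> U"
  shows "(f has_vector_derivative D1 f x) (at x within S)"
proof -
  have d: "(f has_derivative frechet_derivative f (at x)) (at x)"
    by (rule Ck_SucD1[OF assms])
  have l: "linear (frechet_derivative f (at x))" using d has_derivative_linear by blast
  have "frechet_derivative f (at x) h = h *\<^sub>R D1 f x" for h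
    unfolding D1_def using linear_cmul[OF l, of h 1] by simp
  then have "frechet_derivative f (at x) = (\<lambda>h. h *\<^sub>R D1 f x)" by (rule ext)
  then show ?thesis unfolding has_vector_derivative_def
    using has_derivative_at_withinI[OF d] by simp
qed

lemma cont_swap_comp:
  assumes "continuous_on U g" "\<And>s t. s \<in> {a..b} \<Longrightarrow> t \<in> J \<Longrightarrow> (s, t) \<in> U"
  shows "continuous_on (J \<times> {a..b}) (\<lambda>(x, t). g (t, x))"
proof -
  have c: "continuous_on (J \<times> {a..b}) (\<lambda>p. (snd p, fst p))"
    by (intro continuous_on_Pair continuous_on_snd continuous_on_fst continuous_on_id)
  have i: "(\<lambda>p. (snd p, fst p)) ` (J \<times> {a..b}) \<subseteq> U" using assms(2) by auto
  have "continuous_on (J \<times> {a..b}) (\<lambda>p. g (snd p, fst p))"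
    by (rule continuous_on_compose2[OF assms(1) c i])
  then show ?thesis by (simp add: split_beta)
qed

lemma cont_slice_s:
  assumes "continuous_on U g" "\<And>s. s \<in> {a..b} \<Longrightarrow> (s, t) \<in> U"
  shows "continuous_on {a..b} (\<lambda>s. g (s, t))"
proof -
  have c: "continuous_on {a..b} (\<lambda>s. (s, t))"
    by (intro continuous_on_Pair continuous_on_const continuous_on_id)
  have i: "(\<lambda>s. (s, t)) ` {a..b} \<subseteq> U" using assms(2) by auto
  show ?thesis by (rule continuous_on_compose2[OF assms(1) c i])
qed

lemma Ck_param_int:
  fixes f :: "real \<times> real \<Rightarrow> real"
  assumes "open U" "Ck_on n U f" "open J" "convex J" "\<And>s t. s \<in> {a..b} \<Longrightarrow> t \<in> J \<Longrightarrow> (s, t) \<in> U"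
  shows "Ck_on n J (\<lambda>t. integral {a..b} (\<lambda>s. f (s, t)))"
  using assms(2)
proof (induction n arbitrary: f)
  case 0
  have "continuous_on (J \<times> {a..b}) (\<lambda>(x, t). f (t, x))"
    by (rule cont_swap_comp[OF Ck_cont[OF 0] assms(5)])
  then have "continuous_on J (\<lambda>x. integral (cbox a b) (\<lambda>t. f (t, x)))"
    using integral_continuous_on_param[of J a b "\<lambda>x t. f (t, x)"] by (simp only: cbox_interval)
  then show ?case by (simp only: Ck_on.simps cbox_interval)
next
  case (Suc n)
  show ?case
  proof (rule Ck_SucI[OF assms(3)])
    fix t assume "t \<in> J"
    have cD: "continuous_on (J \<times> {a..b}) (\<lambda>(x, t). Dt f (t, x))"
      by (rule cont_swap_comp[OF Ck_cont[OF Ck_Dt[OF Suc.prems]] assms(5)])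
    have "((\<lambda>t. integral (cbox a b) (\<lambda>s. f (s, t))) has_vector_derivative integral (cbox a b) (\<lambda>s. Dt f (s, t))) (at t within J)"
    proof (rule leibniz_rule_vector_derivative[of J a b "\<lambda>t s. f (s, t)" "\<lambda>t s. Dt f (s, t)"])
      show "\<And>x s. x \<in> J \<Longrightarrow> s \<in> cbox a b \<Longrightarrow> ((\<lambda>x. f (s, x)) has_vector_derivative Dt f (s, x)) (at x within J)"
      proof -
        fix x s assume "x \<in> J" "s \<in> cbox a b"
        then have "(s, x) \<in> U" using assms(5) by (simp add: cbox_interval)
        then show "((\<lambda>x. f (s, x)) has_vector_derivative Dt f (s, x)) (at x within J)"
          by (rule hvd_t[OF assms(1) Suc.prems])
      qed
      show "\<And>x. x \<in> J \<Longrightarrow> (\<lambda>s. f (s, x)) integrable_on cbox a b"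
      proof -
        fix x assume "x \<in> J"
        have "continuous_on {a..b} (\<lambda>s. f (s, x))"
          by (rule cont_slice_s[OF Ck_cont[OF Suc.prems]]) (simp add: assms(5) \<open>x \<in> J\<close>)
        then show "(\<lambda>s. f (s, x)) integrable_on cbox a b" by (simp add: integrable_continuous_interval)
      qed
      show "continuous_on (J \<times> cbox a b) (\<lambda>(x, t). Dt f (t, x))" using cD by simp
      show "t \<in> J" by fact
      show "convex J" by (rule assms(4))
    qed
    then have "((\<lambda>t. integral {a..b} (\<lambda>s. f (s, t))) has_vector_derivative integral {a..b} (\<lambda>s. Dt f (s, t))) (at t)"
      unfolding at_within_open[OF \<open>t \<in> J\<close> assms(3), symmetric] cbox_interval[symmetric] .
    then show "((\<lambda>t. integral {a..b} (\<lambda>s. f (s, t))) has_derivative (\<lambda>h. h *\<^sub>R integral {a..b} (\<lambda>s. Dt f (s, t)))) (at t)"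
      unfolding has_vector_derivative_def .
  next
    fix i :: real assume "i \<in> Basis"
    then have "i = 1" by simp
    then show "Ck_on n J (\<lambda>t. i *\<^sub>R integral {a..b} (\<lambda>s. Dt f (s, t)))"
      using Suc.IH[OF Ck_Dt[OF Suc.prems]] by (simp only: scaleR_one)
  qed
qed


declare Ck_on.simps(2)[simp del]

definition fk :: "nat \<Rightarrow> real \<Rightarrow> real" where
  "fk k x = (if x > 0 then exp (- inverse x) / x ^ k else 0)"

lemma fk_lim0: "(fk k \<longlongrightarrow> 0) (at 0)"
proof -
  have r: "((\<lambda>x. exp (- inverse x) / x ^ k) \<longlongrightarrow> 0) (at_right (0::real))"
  proof -
    have "((\<lambda>x. (inverse x) ^ k / exp (inverse x)) \<longlongrightarrow> 0) (at_right (0::real))"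
      by (rule filterlim_compose[OF tendsto_power_div_exp_0 filterlim_inverse_at_top_right])
    note lim = this
    have ev: "eventually (\<lambda>x. (inverse x) ^ k / exp (inverse x) = exp (- inverse x) / x ^ k) (at_right (0::real))"
      by (auto simp: eventually_at_right_field exp_minus field_simps power_inverse intro!: exI[of _ 1])
    show ?thesis by (rule iffD1[OF tendsto_cong[OF ev] lim])
  qed
  have "(fk k \<longlongrightarrow> 0) (at_right 0)"
  proof -
    have ev: "eventually (\<lambda>x. exp (- inverse x) / x ^ k = fk k x) (at_right (0::real))"
      by (auto simp: eventually_at_right_field fk_def intro!: exI[of _ 1])
    show ?thesis by (rule iffD1[OF tendsto_cong[OF ev] r])
  qed
  moreover have "(fk k \<longlongrightarrow> 0) (at_left 0)"
  proof -
    have ev: "eventually (\<lambda>x. 0 = fk k x) (at_left (0::real))"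
      by (auto simp: eventually_at_left_field fk_def intro!: exI[of _ "-1"])
    show ?thesis by (rule iffD1[OF tendsto_cong[OF ev] tendsto_const])
  qed
  ultimately show ?thesis by (simp add: filterlim_at_split)
qed

lemma fk_0 [simp]: "fk k 0 = 0" by (simp add: fk_def)

lemma fk_cont: "continuous_on UNIV (fk k)"
proof -
  have "isCont (fk k) x" for x
  proof (cases "x = 0")
    case True then show ?thesis using fk_lim0 by (simp add: isCont_def)
  next
    case False
    show ?thesis
    proof (cases "x > 0")
      case True
      have c: "isCont (\<lambda>x. exp (- inverse x) / x ^ k) x" using True by (auto intro!: continuous_intros)
      have ev: "\<forall>\<^sub>F y in nhds x. exp (- inverse y) / y ^ k = fk k y"
        using eventually_nhds_in_open[of "{0<..}" x] True by (auto simp: fk_def elim!: eventually_mono)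
      show ?thesis by (rule iffD1[OF isCont_cong[OF ev] c])
    next
      case False
      with \<open>x \<noteq> 0\<close> have "x < 0" by simp
      have ev: "\<forall>\<^sub>F y in nhds x. 0 = fk k y"
        using eventually_nhds_in_open[of "{..<0}" x] \<open>x < 0\<close> by (auto simp: fk_def elim!: eventually_mono)
      show ?thesis by (rule iffD1[OF isCont_cong[OF ev] continuous_const])
    qed
  qed
  then show ?thesis by (simp add: continuous_at_imp_continuous_on)
qed

lemma fk_deriv: "(fk k has_real_derivative (- real k * fk (k+1) x + fk (k+2) x)) (at x)"
proof (cases "x = 0")
  case True
  have "((\<lambda>h. (fk k (0 + h) - fk k 0) / h) \<longlongrightarrow> 0) (at 0)"
  proof -
    have ev: "\<forall>\<^sub>F h in at 0. fk (k+1) h = (fk k (0 + h) - fk k 0) / h"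
      by (auto simp: fk_def eventually_at_filter field_simps)
    show ?thesis by (rule iffD1[OF tendsto_cong[OF ev] fk_lim0[of "k+1"]])
  qed
  then show ?thesis using True by (simp add: DERIV_def)
next
  case False
  show ?thesis
  proof (cases "x > 0")
    case True
    have d: "((\<lambda>x. exp (- inverse x) * inverse x ^ k) has_real_derivative
        (exp (- inverse x) * (inverse x * inverse x)) * inverse x ^ k + exp (- inverse x) * (real k * inverse x ^ (k - 1) * (- (inverse x * inverse x)))) (at x)"
      using True by (auto intro!: derivative_eq_intros)
    have eq: "(exp (- inverse x) * (inverse x * inverse x)) * inverse x ^ k + exp (- inverse x) * (real k * inverse x ^ (k - 1) * (- (inverse x * inverse x)))
        = - real k * fk (k+1) x + fk (k+2) x"
    proof (cases k)
      case 0 then show ?thesis using True by (simp add: fk_def field_simps power2_eq_square)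
    next
      case (Suc m) then show ?thesis using True by (simp add: fk_def field_simps power2_eq_square power_inverse)
    qed
    have "((\<lambda>x. exp (- inverse x) / x ^ k) has_real_derivative - real k * fk (k+1) x + fk (k+2) x) (at x)"
      using d unfolding eq by (simp add: divide_inverse power_inverse)
    moreover have ev: "\<forall>\<^sub>F y in nhds x. exp (- inverse y) / y ^ k = fk k y"
      using eventually_nhds_in_open[of "{0<..}" x] True by (auto simp: fk_def elim!: eventually_mono)
    ultimately show ?thesis using iffD1[OF DERIV_cong_ev[OF refl ev refl]] by blast
  next
    case False
    with \<open>x \<noteq> 0\<close> have "x < 0" by simp
    have ev: "\<forall>\<^sub>F y in nhds x. 0 = fk k y"
      using eventually_nhds_in_open[of "{..<0}" x] \<open>x < 0\<close> by (auto simp: fk_def elim!: eventually_mono)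
    have "(fk k has_real_derivative 0) (at x)"
      by (rule iffD1[OF DERIV_cong_ev[OF refl ev refl] DERIV_const])
    then show ?thesis using \<open>x < 0\<close> by (simp add: fk_def)
  qed
qed

lemma fk_Ck: "Ck_on n UNIV (fk k)"
proof (induction n arbitrary: k)
  case 0 then show ?case using fk_cont by simp
next
  case (Suc n)
  show ?case
  proof (rule Ck_SucI)
    fix x :: real
    show "(fk k has_derivative (\<lambda>h. h * (- real k * fk (k+1) x + fk (k+2) x))) (at x)"
      using fk_deriv[of k x] by (simp add: has_field_derivative_def mult_commute_abs)
  next
    fix i :: real assume "i \<in> Basis"
    then have "i = 1" by simp
    have "Ck_on n UNIV (\<lambda>x. (- real k) * fk (k+1) x + fk (k+2) x)"
      by (rule Ck_add[OF open_UNIV Ck_bilinear[OF open_UNIV bounded_bilinear_mult Ck_const Suc.IH] Suc.IH])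
    then show "Ck_on n UNIV (\<lambda>x. i * (- real k * fk (k+1) x + fk (k+2) x))" using \<open>i = 1\<close> by simp
  qed simp
qed

definition bump :: "real \<Rightarrow> real \<Rightarrow> real \<Rightarrow> real" where
  "bump a b s = fk 0 (s - a) * fk 0 (b - s)"

lemma bump_Ck: "Ck_on n UNIV (bump a b)"
proof -
  have a1: "Ck_on n UNIV (\<lambda>s::real. s - a)"
    using Ck_add[OF open_UNIV Ck_id[OF open_UNIV] Ck_const[of n UNIV "-a"]] by simp
  have a2: "Ck_on n UNIV (\<lambda>s::real. b - s)"
    using Ck_add[OF open_UNIV Ck_linear[OF open_UNIV bounded_linear_minus[OF bounded_linear_ident] Ck_id[OF open_UNIV]] Ck_const[of n UNIV "b"]] by simp
  have c1: "Ck_on n UNIV (\<lambda>s. fk 0 (s - a))" by (rule Ck_compose[OF open_UNIV open_UNIV _ fk_Ck a1]) simp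
  have c2: "Ck_on n UNIV (\<lambda>s. fk 0 (b - s))" by (rule Ck_compose[OF open_UNIV open_UNIV _ fk_Ck a2]) simp
  show ?thesis unfolding bump_def[abs_def] by (rule Ck_bilinear[OF open_UNIV bounded_bilinear_mult c1 c2])
qed

lemma bump_zero: "s \<le> a \<or> s \<ge> b \<Longrightarrow> bump a b s = 0"
  by (auto simp: bump_def fk_def)

lemma bump_pos: "a < s \<Longrightarrow> s < b \<Longrightarrow> bump a b s > 0"
  by (auto simp: bump_def fk_def)

lemma bump_nonneg: "bump a b s \<ge> 0"
  by (auto simp: bump_def fk_def)


lemma box_in_open:
  fixes s0 t0 :: real
  assumes "open U" "(s0, t0) \<in> U"
  obtains e where "e > 0" "\<And>s t. \<bar>s - s0\<bar> \<le> e \<Longrightarrow> \<bar>t - t0\<bar> \<le> e \<Longrightarrow> (s, t) \<in> U"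
proof -
  obtain r where r: "r > 0" "ball (s0, t0) r \<subseteq> U" using assms open_contains_ball by blast
  show ?thesis
  proof (rule that[of "r/3"])
    show "r/3 > 0" using r by simp
    fix s t assume h: "\<bar>s - s0\<bar> \<le> r/3" "\<bar>t - t0\<bar> \<le> r/3"
    have "dist (s0, t0) (s, t) = norm (s0 - s, t0 - t)" by (simp add: dist_norm)
    also have "\<dots> \<le> norm (s0 - s) + norm (t0 - t)" by (rule norm_Pair_le)
    also have "\<dots> < r" using h r by (simp add: abs_minus_commute)
    finally show "(s, t) \<in> U" using r by auto
  qed
qed

lemma vd_eq_on_open:
  assumes "(f has_vector_derivative a) (at x)" "(g has_vector_derivative b) (at x)"
    "open S" "x \<in> S" "\<And>y. y \<in> S \<Longrightarrow> f y = g y"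
  shows "a = b"
  using vector_derivative_unique_at[OF has_vector_derivative_transform_within_open[OF assms(1,3,4,5)] assms(2)] .

lemma mixed_sym:
  fixes f :: "real \<times> real \<Rightarrow> 'c::euclidean_space"
  assumes U: "open U" and f2: "Ck_on (Suc (Suc n)) U f" and p: "(s0, t0) \<in> U"
  shows "Ds (Dt f) (s0, t0) = Dt (Ds f) (s0, t0)"
proof -
  obtain e where e: "e > 0" "\<And>s t. \<bar>s - s0\<bar> \<le> e \<Longrightarrow> \<bar>t - t0\<bar> \<le> e \<Longrightarrow> (s, t) \<in> U"
    using box_in_open[OF U p] by blast
  define a where "a = s0 - e"
  define J where "J = {t0 - e<..<t0 + e}"
  have J: "open J" "convex J" "t0 \<in> J" using e(1) by (auto simp: J_def)
  have inU: "(s, t) \<in> U" if "s \<in> {a..s0+e}" "t \<in> J" for s t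
    using e(2)[of s t] that by (auto simp: a_def J_def abs_le_iff)
  have f1: "Ck_on (Suc n) U f" using f2 by (rule Ck_mono)
  have dsf: "Ck_on (Suc n) U (Ds f)" using f2 by (rule Ck_Ds)
  have dtf: "Ck_on (Suc n) U (Dt f)" using f2 by (rule Ck_Dt)
  define g where "g u = Dt (Ds f) (u, t0)" for u
  have contg: "continuous_on {a..s0+e} g"
    unfolding g_def by (rule cont_slice_s[OF Ck_cont[OF Ck_Dt[OF dsf]]]) (use inU J in auto)
  have key: "Dt f (s, t0) = Dt f (a, t0) + integral {a..s} g" if s: "s \<in> {a..s0+e}" for s
  proof -
    have ftc: "f (s, t) - f (a, t) = integral {a..s} (\<lambda>u. Ds f (u, t))" if t: "t \<in> J" for t
    proof -
      have "((\<lambda>u. Ds f (u, t)) has_integral (f (s, t) - f (a, t))) {a..s}"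
      proof (rule fundamental_theorem_of_calculus)
        show "a \<le> s" using s by simp
        fix u assume "u \<in> {a..s}"
        then have "(u, t) \<in> U" using inU s t by auto
        then show "((\<lambda>u. f (u, t)) has_vector_derivative Ds f (u, t)) (at u within {a..s})"
          by (rule hvd_s[OF U f1])
      qed
      then show ?thesis by (simp add: integral_unique)
    qed
    have d1: "((\<lambda>t. f (s, t) - f (a, t)) has_vector_derivative (Dt f (s, t0) - Dt f (a, t0))) (at t0)"
    proof (rule has_vector_derivative_diff)
      show "((\<lambda>t. f (s, t)) has_vector_derivative Dt f (s, t0)) (at t0)"
        by (rule hvd_t[OF U f1]) (use inU s J in auto)
      show "((\<lambda>t. f (a, t)) has_vector_derivative Dt f (a, t0)) (at t0)"
        by (rule hvd_t[OF U f1]) (use inU s J e(1) in \<open>auto simp: a_def\<close>)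
    qed
    have d2: "((\<lambda>t. integral {a..s} (\<lambda>u. Ds f (u, t))) has_vector_derivative integral {a..s} g) (at t0)"
    proof -
      have "((\<lambda>t. integral (cbox a s) (\<lambda>u. Ds f (u, t))) has_vector_derivative integral (cbox a s) g) (at t0 within J)"
        unfolding g_def
      proof (rule leibniz_rule_vector_derivative[of J a s "\<lambda>t u. Ds f (u, t)" "\<lambda>t u. Dt (Ds f) (u, t)"])
        show "((\<lambda>x. Ds f (u, x)) has_vector_derivative Dt (Ds f) (u, x)) (at x within J)"
          if "x \<in> J" "u \<in> cbox a s" for x u
          by (rule hvd_t[OF U dsf]) (use that inU s in auto)
        show "(\<lambda>u. Ds f (u, x)) integrable_on cbox a s" if "x \<in> J" for x
        proof -
          have "continuous_on {a..s} (\<lambda>u. Ds f (u, x))"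
            by (rule cont_slice_s[OF Ck_cont[OF dsf]]) (use that inU s in auto)
          then show ?thesis by (simp add: integrable_continuous_interval)
        qed
        have "continuous_on (J \<times> {a..s}) (\<lambda>(x, t). Dt (Ds f) (t, x))"
          by (rule cont_swap_comp[OF Ck_cont[OF Ck_Dt[OF dsf]]]) (use inU s in auto)
        then show "continuous_on (J \<times> cbox a s) (\<lambda>(x, t). Dt (Ds f) (t, x))" by simp
        show "t0 \<in> J" by (rule J(3))
        show "convex J" by (rule J(2))
      qed
      then show ?thesis
        unfolding at_within_open[OF J(3) J(1)] cbox_interval .
    qed
    have "Dt f (s, t0) - Dt f (a, t0) = integral {a..s} g"
      by (rule vd_eq_on_open[OF d1 d2 J(1) J(3)]) (rule ftc)
    then show ?thesis by (simp add: algebra_simps)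
  qed
  have s0i: "s0 \<in> {a<..<s0+e}" using e(1) by (simp add: a_def)
  have d3: "((\<lambda>s. Dt f (s, t0)) has_vector_derivative Ds (Dt f) (s0, t0)) (at s0)"
    by (rule hvd_s[OF U dtf p])
  have d4: "((\<lambda>s. Dt f (a, t0) + integral {a..s} g) has_vector_derivative g s0) (at s0)"
  proof -
    have "((\<lambda>s. integral {a..s} g) has_vector_derivative g s0) (at s0 within {a..s0+e})"
      by (rule integral_has_vector_derivative[OF contg]) (use s0i in auto)
    moreover have "at s0 within {a..s0+e} = at s0"
      by (rule at_within_interior) (use s0i in auto)
    ultimately have "((\<lambda>s. integral {a..s} g) has_vector_derivative g s0) (at s0)" by simp
    then show ?thesis using has_vector_derivative_add[OF has_vector_derivative_const] by fastforce
  qed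
  have "Ds (Dt f) (s0, t0) = g s0"
    by (rule vd_eq_on_open[OF d3 d4 _ s0i]) (auto intro: key)
  then show ?thesis by (simp add: g_def)
qed


lemma curve_d12:
  fixes c e e1 e2 :: "real \<Rightarrow> real \<times> real"
  assumes L: "L > 0" and ce: "\<And>s. s \<in> {0..2*L} \<Longrightarrow> c s = e s"
    and d1: "\<And>s. s \<in> {0..2*L} \<Longrightarrow> (e has_vector_derivative e1 s) (at s within {0..2*L})"
    and d2: "\<And>s. s \<in> {0..2*L} \<Longrightarrow> (e1 has_vector_derivative e2 s) (at s within {0..2*L})"
    and s: "s \<in> {0..2*L}"
  shows "d1 L c s = e1 s" "d2 L c s = e2 s"
proof -
  have L2: "0 < 2 * L" using L by simp
  have A: "d1 L c x = e1 x" if x: "x \<in> {0..2*L}" for x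
  proof -
    have "(c has_vector_derivative e1 x) (at x within {0..2*L})"
      by (rule has_vector_derivative_transform[OF x ce d1[OF x]])
    then show ?thesis unfolding d1_def by (rule vector_derivative_within_closed_interval[OF L2 x])
  qed
  then show "d1 L c s = e1 s" using s .
  have "(d1 L c has_vector_derivative e2 s) (at s within {0..2*L})"
    by (rule has_vector_derivative_transform[OF s A d2[OF s]])
  then show "d2 L c s = e2 s" unfolding d2_def by (rule vector_derivative_within_closed_interval[OF L2 s])
qed

lemma unif_close:
  fixes F :: "real \<times> real \<Rightarrow> 'b::metric_space"
  assumes cF: "continuous_on ({a..b} \<times> {-T..T}) F" and T: "T > 0" and eps: "\<epsilon> > 0"
  obtains \<delta> where "\<delta> > 0" "\<delta> \<le> T" "\<And>s t. s \<in> {a..b} \<Longrightarrow> \<bar>t\<bar> \<le> \<delta> \<Longrightarrow> dist (F (s, t)) (F (s, 0)) < \<epsilon>"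
proof -
  have "uniformly_continuous_on ({a..b} \<times> {-T..T}) F"
    by (rule compact_uniformly_continuous[OF cF]) (intro compact_Times compact_Icc)
  then obtain d where d: "d > 0" "\<And>p q. p \<in> {a..b} \<times> {-T..T} \<Longrightarrow> q \<in> {a..b} \<times> {-T..T} \<Longrightarrow> dist q p < d \<Longrightarrow> dist (F q) (F p) < \<epsilon>"
    unfolding uniformly_continuous_on_def using eps by metis
  show ?thesis
  proof (rule that[of "min (d/2) T"])
    show "min (d/2) T > 0" using d T by simp
    show "min (d/2) T \<le> T" by simp
    fix s t assume st: "s \<in> {a..b}" "\<bar>t\<bar> \<le> min (d/2) T"
    have "dist (s, t) (s, 0) = \<bar>t\<bar>" by (simp add: dist_Pair_Pair dist_real_def)
    then have "dist (s, t) (s, 0) < d" using st d by simp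
    moreover have "(s, t) \<in> {a..b} \<times> {-T..T}" "(s, 0) \<in> {a..b} \<times> {-T..T}" using st T by auto
    ultimately show "dist (F (s, t)) (F (s, 0)) < \<epsilon>" using d(2) by blast
  qed
qed

lemma pos_persist:
  fixes F :: "real \<times> real \<Rightarrow> real"
  assumes cF: "continuous_on ({a..b} \<times> {-T..T}) F" and T: "T > 0" and ab: "a \<le> b"
    and pos: "\<And>s. s \<in> {a..b} \<Longrightarrow> F (s, 0) > 0"
  obtains \<delta> where "\<delta> > 0" "\<delta> \<le> T" "\<And>s t. s \<in> {a..b} \<Longrightarrow> \<bar>t\<bar> \<le> \<delta> \<Longrightarrow> F (s, t) > 0"
proof -
  have c0: "continuous_on {a..b} (\<lambda>s. F (s, 0))"
    by (rule cont_slice_s[OF cF]) (use T in auto)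
  obtain s0 where s0: "s0 \<in> {a..b}" "\<And>s. s \<in> {a..b} \<Longrightarrow> F (s0, 0) \<le> F (s, 0)"
    using continuous_attains_inf[OF compact_Icc _ c0] ab by auto
  define m where "m = F (s0, 0)"
  have m: "m > 0" using pos[OF s0(1)] by (simp add: m_def)
  obtain \<delta> where d: "\<delta> > 0" "\<delta> \<le> T" "\<And>s t. s \<in> {a..b} \<Longrightarrow> \<bar>t\<bar> \<le> \<delta> \<Longrightarrow> dist (F (s, t)) (F (s, 0)) < m"
    using unif_close[OF cF T m] by blast
  show ?thesis
  proof (rule that[OF d(1,2)])
    fix s t assume st: "s \<in> {a..b}" "\<bar>t\<bar> \<le> \<delta>"
    have "\<bar>F (s, t) - F (s, 0)\<bar> < m" using d(3)[OF st] by (simp add: dist_real_def)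
    moreover have "F (s, 0) \<ge> m" using s0(2)[OF st(1)] by (simp add: m_def)
    ultimately show "F (s, t) > 0" by linarith
  qed
qed


lemma inj_persist:
  fixes e e1 :: "real \<times> real \<Rightarrow> real \<times> real"
  assumes ab: "a < b" and T: "T > 0"
    and ce: "continuous_on ({a..b} \<times> {-T..T}) e"
    and ce1: "continuous_on ({a..b} \<times> {-T..T}) e1"
    and der: "\<And>s t. s \<in> {a..b} \<Longrightarrow> t \<in> {-T..T} \<Longrightarrow> ((\<lambda>s. e (s, t)) has_vector_derivative e1 (s, t)) (at s within {a..b})"
    and inj0: "inj_on (\<lambda>s. e (s, 0)) {a..b}"
    and unit: "\<And>s. s \<in> {a..b} \<Longrightarrow> norm (e1 (s, 0)) = 1"
  obtains \<delta> where "\<delta> > 0" "\<delta> \<le> T" "\<And>t. \<bar>t\<bar> \<le> \<delta> \<Longrightarrow> inj_on (\<lambda>s. e (s, t)) {a..b}"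
proof -
  have c10: "continuous_on {a..b} (\<lambda>s. e1 (s, 0))"
    by (rule cont_slice_s[OF ce1]) (use T in auto)
  have "uniformly_continuous_on {a..b} (\<lambda>s. e1 (s, 0))"
    by (rule compact_uniformly_continuous[OF c10 compact_Icc])
  then have "\<exists>d>0. \<forall>x\<in>{a..b}. \<forall>x'\<in>{a..b}. dist x' x < d \<longrightarrow> dist (e1 (x', 0)) (e1 (x, 0)) < 1/8"
    unfolding uniformly_continuous_on_def by (erule_tac x="1/8" in allE) simp
  then obtain d1 where d1': "d1 > 0" "\<forall>x\<in>{a..b}. \<forall>x'\<in>{a..b}. dist x' x < d1 \<longrightarrow> dist (e1 (x', 0)) (e1 (x, 0)) < 1/8"
    by blast
  have d1: "d1 > 0" "\<And>u v. u \<in> {a..b} \<Longrightarrow> v \<in> {a..b} \<Longrightarrow> dist v u < d1 \<Longrightarrow> dist (e1 (v, 0)) (e1 (u, 0)) < 1/8"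
    using d1' by auto
  obtain \<delta>2 where d2: "\<delta>2 > 0" "\<delta>2 \<le> T" "\<And>s t. s \<in> {a..b} \<Longrightarrow> \<bar>t\<bar> \<le> \<delta>2 \<Longrightarrow> dist (e1 (s, t)) (e1 (s, 0)) < 1/8"
    using unif_close[OF ce1 T, of "1/8"] by auto
  define P where "P = ({a..b} \<times> {a..b}) \<inter> {p. snd p - fst p \<ge> d1/2}"
  have cP: "compact P" unfolding P_def
  proof (rule compact_Int_closed)
    show "compact ({a..b} \<times> {a..b})" by (intro compact_Times compact_Icc)
    have "closed {p::real\<times>real. d1/2 \<le> snd p - fst p}"
      by (rule closed_Collect_le) (intro continuous_intros)+
    then show "closed {p::real\<times>real. snd p - fst p \<ge> d1/2}" by simp
  qed
  obtain m where m: "m > 0" "\<And>u v. (u, v) \<in> P \<Longrightarrow> m \<le> norm (e (v, 0) - e (u, 0))"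
  proof (cases "P = {}")
    case True then show ?thesis using that[of 1] by auto
  next
    case False
    have cn: "continuous_on P (\<lambda>p. norm (e (snd p, 0) - e (fst p, 0)))"
    proof -
      have c0: "continuous_on {a..b} (\<lambda>s. e (s, 0))"
        by (rule cont_slice_s[OF ce]) (use T in auto)
      have "continuous_on P (\<lambda>p. e (snd p, 0))"
        by (rule continuous_on_compose2[OF c0]) (auto simp: P_def intro: continuous_intros)
      moreover have "continuous_on P (\<lambda>p. e (fst p, 0))"
        by (rule continuous_on_compose2[OF c0]) (auto simp: P_def intro: continuous_intros)
      ultimately show ?thesis by (intro continuous_on_norm continuous_on_diff)
    qed
    obtain p0 where p0: "p0 \<in> P" "\<And>p. p \<in> P \<Longrightarrow> norm (e (snd p0, 0) - e (fst p0, 0)) \<le> norm (e (snd p, 0) - e (fst p, 0))"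
      using continuous_attains_inf[OF cP False cn] by blast
    have "e (snd p0, 0) \<noteq> e (fst p0, 0)"
    proof
      assume eq: "e (snd p0, 0) = e (fst p0, 0)"
      have "snd p0 \<in> {a..b}" "fst p0 \<in> {a..b}" using p0(1) by (auto simp: P_def)
      then have "snd p0 = fst p0" using inj0 eq by (auto dest: inj_onD)
      then show False using p0(1) d1(1) by (auto simp: P_def)
    qed
    then show ?thesis using that[of "norm (e (snd p0, 0) - e (fst p0, 0))"] p0(2) by fastforce
  qed
  obtain \<delta>3 where d3: "\<delta>3 > 0" "\<delta>3 \<le> T" "\<And>s t. s \<in> {a..b} \<Longrightarrow> \<bar>t\<bar> \<le> \<delta>3 \<Longrightarrow> dist (e (s, t)) (e (s, 0)) < m/2"
    using unif_close[OF ce T, of "m/2"] m(1) by auto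
  show ?thesis
  proof (rule that[of "min \<delta>2 \<delta>3"])
    show "min \<delta>2 \<delta>3 > 0" using d2 d3 by simp
    show "min \<delta>2 \<delta>3 \<le> T" using d2 d3 by simp
    fix t assume t: "\<bar>t\<bar> \<le> min \<delta>2 \<delta>3"
    have tT: "t \<in> {-T..T}" using t d2(2) by auto
    have noeq: False if uv: "u \<in> {a..b}" "v \<in> {a..b}" "u < v" "e (u, t) = e (v, t)" for u v
    proof (cases "v - u \<ge> d1/2")
      case True
      then have "(u, v) \<in> P" using uv by (simp add: P_def)
      then have "m \<le> norm (e (v, 0) - e (u, 0))" by (rule m(2))
      also have "\<dots> \<le> dist (e (v, t)) (e (v, 0)) + dist (e (u, t)) (e (u, 0))"
        using uv(4) norm_triangle_ineq4[of "e (v, 0) - e (v, t)" "e (u, 0) - e (u, t)"]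
        by (simp add: dist_norm norm_minus_commute algebra_simps)
      also have "\<dots> < m/2 + m/2"
        using d3(3)[OF uv(1)] d3(3)[OF uv(2)] t by (intro add_strict_mono) auto
      finally show False by simp
    next
      case False
      have B: "norm (e1 (x, t) - e1 (u, t)) \<le> 3/8" if x: "x \<in> {u..v}" for x
      proof -
        have xab: "x \<in> {a..b}" using x uv by auto
        have "e1 (x, t) - e1 (u, t) = ((e1 (x, t) - e1 (x, 0)) + (e1 (x, 0) - e1 (u, 0))) + (e1 (u, 0) - e1 (u, t))"
          by simp
        then have "norm (e1 (x, t) - e1 (u, t)) \<le> norm ((e1 (x, t) - e1 (x, 0)) + (e1 (x, 0) - e1 (u, 0))) + norm (e1 (u, 0) - e1 (u, t))"
          using norm_triangle_ineq by metis
        also have "\<dots> \<le> norm (e1 (x, t) - e1 (x, 0)) + norm (e1 (x, 0) - e1 (u, 0)) + norm (e1 (u, 0) - e1 (u, t))"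
          using norm_triangle_ineq add_right_mono by blast
        finally have "norm (e1 (x, t) - e1 (u, t)) \<le> dist (e1 (x, t)) (e1 (x, 0)) + dist (e1 (x, 0)) (e1 (u, 0)) + dist (e1 (u, 0)) (e1 (u, t))"
          by (simp add: dist_norm)
        also have "\<dots> \<le> 1/8 + 1/8 + 1/8"
        proof (intro add_mono less_imp_le)
          show "dist (e1 (x, t)) (e1 (x, 0)) < 1/8" using d2(3)[OF xab] t by auto
          show "dist (e1 (x, 0)) (e1 (u, 0)) < 1/8"
            using d1(2)[OF uv(1) xab] x False by (auto simp: dist_real_def)
          show "dist (e1 (u, 0)) (e1 (u, t)) < 1/8" using d2(3)[OF uv(1), of t] t by (simp add: dist_commute)
        qed
        finally show ?thesis by simp
      qed
      have "norm (e (v, t) - e (u, t) - (v - u) *\<^sub>R e1 (u, t)) \<le> norm (v - u) * (3/8)"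
      proof (rule vector_differentiable_bound_linearization[where S="{u..v}" and f="\<lambda>s. e (s, t)" and f'="\<lambda>s. e1 (s, t)" and a=u and b=v and B="3/8"])
        fix x assume "x \<in> {u..v}"
        then have "x \<in> {a..b}" using uv by auto
        have "{u..v} \<subseteq> {a..b}" using uv by auto
        then show "((\<lambda>s. e (s, t)) has_vector_derivative e1 (x, t)) (at x within {u..v})"
          by (rule has_vector_derivative_within_subset[OF der[OF \<open>x \<in> {a..b}\<close> tT]])
      next
        show "closed_segment u v \<subseteq> {u..v}" using uv by (simp add: closed_segment_eq_real_ivl)
        show "u \<in> {u..v}" using uv by simp
      next
        fix x assume "x \<in> {u..v}" then show "norm (e1 (x, t) - e1 (u, t)) \<le> 3/8" by (rule B)
      qed
      then have "(v - u) * norm (e1 (u, t)) \<le> (v - u) * (3/8)" using uv by simp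
      moreover have "norm (e1 (u, t)) \<ge> 7/8"
      proof -
        have "1 = norm (e1 (u, 0))" using unit[OF uv(1)] by simp
        also have "\<dots> \<le> norm (e1 (u, t)) + norm (e1 (u, 0) - e1 (u, t))"
          by (rule norm_triangle_sub)
        also have "\<dots> = norm (e1 (u, t)) + dist (e1 (u, t)) (e1 (u, 0))"
          by (simp add: dist_norm norm_minus_commute)
        also have "\<dots> < norm (e1 (u, t)) + 1/8" using d2(3)[OF uv(1)] t by auto
        finally show ?thesis by simp
      qed
      moreover have "v - u > 0" using uv(3) by simp
      ultimately show False using mult_le_cancel_left_pos[of "v - u" "norm (e1 (u, t))" "3/8"] by linarith
    qed
    show "inj_on (\<lambda>s. e (s, t)) {a..b}"
    proof (rule inj_onI)
      fix u v assume "u \<in> {a..b}" "v \<in> {a..b}" "e (u, t) = e (v, t)"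
      then show "u = v" using noeq[of u v] noeq[of v u] by (cases u v rule: linorder_cases) auto
    qed
  qed
qed


lemma bl_perp: "bounded_linear perp"
proof -
  have "bounded_linear (\<lambda>v::real\<times>real. (snd v, - fst v))"
    by (intro bounded_linear_Pair bounded_linear_snd bounded_linear_minus[OF bounded_linear_fst])
  then show ?thesis by (simp add: perp_def[abs_def])
qed

lemma bl_pair0: "bounded_linear (\<lambda>s::real. (s, 0::real))"
  by (intro bounded_linear_Pair bounded_linear_ident bounded_linear_zero)
lemma bl_0pair: "bounded_linear (\<lambda>s::real. (0::real, s))"
  by (intro bounded_linear_Pair bounded_linear_ident bounded_linear_zero)

lemma inner_perp: "inner (a::real\<times>real) (perp b) = fst a * snd b - snd a * fst b"
  by (simp add: perp_def inner_prod_def)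

locale mt =
  fixes L x0 tV d :: real and \<gamma> :: "real \<Rightarrow> real \<times> real" and V G :: "real \<times> real \<Rightarrow> real \<times> real"
  assumes L: "L > 0" and x0: "x0 > 0" and d: "d > 0"
    and adm: "admissible L x0 \<gamma>" and arc: "arclength_param L \<gamma>"
    and av: "admissible_variation L x0 \<gamma> V tV"
    and fo: "first_order_area_preserving L \<gamma> V tV"
    and GCk: "\<And>n. Ck_on n ({-d<..<2*L+d} \<times> {-tV<..<tV}) G"
    and GV: "\<And>s t. s \<in> {0..2*L} \<Longrightarrow> t \<in> {-tV..tV} \<Longrightarrow> G (s, t) = V (s, t)"
begin

abbreviation "II \<equiv> {-d<..<2*L+d}"
abbreviation "J0 \<equiv> {-tV<..<tV}"
abbreviation "UU \<equiv> II \<times> J0"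

lemma tV: "tV > 0" using av by (simp add: admissible_variation_def)
lemma oII: "open II" by simp
lemma oJ0: "open J0" by simp
lemma oUU: "open UU" by (intro open_Times) simp_all
lemma II_sub: "{0..2*L} \<subseteq> II" using d by auto
lemma UU_mem: "s \<in> II \<Longrightarrow> t \<in> J0 \<Longrightarrow> (s, t) \<in> UU" by simp
lemma UU_mem2: "s \<in> {0..2*L} \<Longrightarrow> t \<in> J0 \<Longrightarrow> (s, t) \<in> UU" using II_sub by auto
lemma zero_J0: "(0::real) \<in> J0" using tV by simp

lemma Ck_G: "Ck_on n UU G" by (rule GCk)
lemma Ck_Gs: "Ck_on n UU (Ds G)" by (rule Cinf_Ds[OF GCk])
lemma Ck_Gt: "Ck_on n UU (Dt G)" by (rule Cinf_Dt[OF GCk])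
lemma Ck_Gss: "Ck_on n UU (Ds (Ds G))" by (rule Cinf_Ds[OF Ck_Gs])
lemma Ck_Gts: "Ck_on n UU (Ds (Dt G))" by (rule Cinf_Ds[OF Ck_Gt])
lemma Ck_Gst: "Ck_on n UU (Dt (Ds G))" by (rule Cinf_Dt[OF Ck_Gs])
lemma Ck_Gtt: "Ck_on n UU (Dt (Dt G))" by (rule Cinf_Dt[OF Ck_Gt])

lemma hG_s: "(s, t) \<in> UU \<Longrightarrow> ((\<lambda>s. G (s, t)) has_vector_derivative Ds G (s, t)) (at s within S)"
  by (rule hvd_s[OF oUU Ck_G])
lemma hGs_s: "(s, t) \<in> UU \<Longrightarrow> ((\<lambda>s. Ds G (s, t)) has_vector_derivative Ds (Ds G) (s, t)) (at s within S)"
  by (rule hvd_s[OF oUU Ck_Gs])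
lemma hG_t: "(s, t) \<in> UU \<Longrightarrow> ((\<lambda>t. G (s, t)) has_vector_derivative Dt G (s, t)) (at t within S)"
  by (rule hvd_t[OF oUU Ck_G])
lemma hGt_t: "(s, t) \<in> UU \<Longrightarrow> ((\<lambda>t. Dt G (s, t)) has_vector_derivative Dt (Dt G) (s, t)) (at t within S)"
  by (rule hvd_t[OF oUU Ck_Gt])
lemma hGt_s: "(s, t) \<in> UU \<Longrightarrow> ((\<lambda>s. Dt G (s, t)) has_vector_derivative Ds (Dt G) (s, t)) (at s within S)"
  by (rule hvd_s[OF oUU Ck_Gt])
lemma hGs_t: "(s, t) \<in> UU \<Longrightarrow> ((\<lambda>t. Ds G (s, t)) has_vector_derivative Dt (Ds G) (s, t)) (at t within S)"
  by (rule hvd_t[OF oUU Ck_Gs])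
lemma sym_G: "(s, t) \<in> UU \<Longrightarrow> Ds (Dt G) (s, t) = Dt (Ds G) (s, t)"
  by (rule mixed_sym[OF oUU Ck_G])

lemma Vt_adm: "t \<in> {-tV..tV} \<Longrightarrow> admissible L x0 (\<lambda>s. V (s, t))"
  using av by (simp add: admissible_variation_def)
lemma V0: "s \<in> {0..2*L} \<Longrightarrow> V (s, 0) = \<gamma> s"
  using av by (simp add: admissible_variation_def)
lemma gam: "s \<in> {0..2*L} \<Longrightarrow> \<gamma> s = G (s, 0)"
  using V0 GV[of s 0] tV by simp

lemma gd: assumes "s \<in> {0..2*L}" shows "d1 L \<gamma> s = Ds G (s, 0)" "d2 L \<gamma> s = Ds (Ds G) (s, 0)"
proof -
  have *: "x \<in> {0..2*L} \<Longrightarrow> (x, 0) \<in> UU" for x using UU_mem2 zero_J0 by blast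
  show "d1 L \<gamma> s = Ds G (s, 0)" "d2 L \<gamma> s = Ds (Ds G) (s, 0)"
    by (rule curve_d12[OF L gam hG_s[OF *] hGs_s[OF *] assms], assumption+)+
qed

lemma unitG: "s \<in> {0..2*L} \<Longrightarrow> norm (Ds G (s, 0)) = 1"
  using arc gd(1) by (simp add: arclength_param_def)

lemma curvG: assumes "s \<in> {0..2*L}" shows "inner (Ds G (s, 0)) (perp (Ds (Ds G) (s, 0))) > 0"
proof -
  have "curvature L \<gamma> s > 0" using adm assms by (simp add: admissible_def)
  then show ?thesis using gd[OF assms] unitG[OF assms] by (simp add: curvature_def)
qed

end


lemma Ck_diff: "open U \<Longrightarrow> Ck_on n U f \<Longrightarrow> Ck_on n U g \<Longrightarrow> Ck_on n U (\<lambda>x. f x - g x)"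
proof -
  assume o: "open U" and f: "Ck_on n U f" and g: "Ck_on n U g"
  have "Ck_on n U (\<lambda>x. f x + (- g x))"
    by (rule Ck_add[OF o f Ck_linear[OF o bounded_linear_minus[OF bounded_linear_ident] g]])
  then show ?thesis by simp
qed

lemma Ck_mult: "open U \<Longrightarrow> Ck_on n U (f :: _ \<Rightarrow> real) \<Longrightarrow> Ck_on n U g \<Longrightarrow> Ck_on n U (\<lambda>x. f x * g x)"
  by (rule Ck_bilinear[OF _ bounded_bilinear_mult])

lemma vd_snd: "(f has_vector_derivative f') F \<Longrightarrow> ((\<lambda>x. snd (f x)) has_vector_derivative snd f') F"
  by (rule bounded_linear.has_vector_derivative[OF bounded_linear_snd])
lemma vd_fst: "(f has_vector_derivative f') F \<Longrightarrow> ((\<lambda>x. fst (f x)) has_vector_derivative fst f') F"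
  by (rule bounded_linear.has_vector_derivative[OF bounded_linear_fst])

context mt begin

definition "eta s = bump (L/2) (3*L/2) s * snd (Ds G (s, 0))"
definition "eta1 = D1 eta"
definition "eta2 = D1 (D1 eta)"

lemma mapII: "s \<in> II \<Longrightarrow> (s, 0) \<in> UU" using zero_J0 by simp

lemma Ck_Gs0: "Ck_on n II (\<lambda>s. Ds G (s, 0))"
  by (rule Ck_compose[OF oII oUU mapII Ck_Gs Ck_lin_map[OF oII bl_pair0]])

lemma Ck_eta: "Ck_on n II eta"
proof -
  have c1: "Ck_on n II (bump (L/2) (3*L/2))" by (rule Ck_subset[OF bump_Ck oII subset_UNIV])
  have c2: "Ck_on n II (\<lambda>s. snd (Ds G (s, 0)))" by (rule Ck_linear[OF oII bounded_linear_snd Ck_Gs0])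
  show ?thesis unfolding eta_def[abs_def] by (rule Ck_mult[OF oII c1 c2])
qed

lemma Ck_eta1: "Ck_on n II eta1" unfolding eta1_def by (rule Cinf_D1[OF Ck_eta])
lemma Ck_eta2: "Ck_on n II eta2" unfolding eta2_def by (rule Cinf_D1[OF Cinf_D1[OF Ck_eta]])

lemma h_eta: "s \<in> II \<Longrightarrow> (eta has_vector_derivative eta1 s) (at s within S)"
  unfolding eta1_def by (rule hvd_1[OF oII Ck_eta])
lemma h_eta1: "s \<in> II \<Longrightarrow> (eta1 has_vector_derivative eta2 s) (at s within S)"
  unfolding eta1_def eta2_def by (rule hvd_1[OF oII Cinf_D1[OF Ck_eta]])

lemma eta_zero: "s \<le> L/2 \<or> s \<ge> 3*L/2 \<Longrightarrow> eta s = 0"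
  by (simp add: eta_def bump_zero)
lemma eta_0: "eta 0 = 0" using L by (intro eta_zero) simp
lemma eta_2L: "eta (2*L) = 0" using L by (intro eta_zero) simp

definition "kA p = (fst (G p) * snd (Ds G p) - fst (Ds G p) * snd (G p)) / 2"
definition "kB p = eta (fst p) * snd (Ds G p)"
definition "aa t = integral {0..2*L} (\<lambda>s. kA (s, t))"
definition "bb t = integral {0..2*L} (\<lambda>s. kB (s, t))"

lemma Ck_kA: "Ck_on n UU kA"
proof -
  have a: "Ck_on n UU (\<lambda>p. fst (G p))" by (rule Ck_linear[OF oUU bounded_linear_fst Ck_G])
  have b: "Ck_on n UU (\<lambda>p. snd (G p))" by (rule Ck_linear[OF oUU bounded_linear_snd Ck_G])
  have c: "Ck_on n UU (\<lambda>p. fst (Ds G p))" by (rule Ck_linear[OF oUU bounded_linear_fst Ck_Gs])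
  have e: "Ck_on n UU (\<lambda>p. snd (Ds G p))" by (rule Ck_linear[OF oUU bounded_linear_snd Ck_Gs])
  have "Ck_on n UU (\<lambda>p. fst (G p) * snd (Ds G p) - fst (Ds G p) * snd (G p))"
    by (rule Ck_diff[OF oUU Ck_mult[OF oUU a e] Ck_mult[OF oUU c b]])
  then show ?thesis unfolding kA_def[abs_def]
    by (rule Ck_linear[OF oUU bounded_linear_divide])
qed

lemma Ck_kB: "Ck_on n UU kB"
proof -
  have a: "Ck_on n UU (\<lambda>p. eta (fst p))"
    by (rule Ck_compose[OF oUU oII _ Ck_eta Ck_lin_map[OF oUU bounded_linear_fst]]) auto
  have e: "Ck_on n UU (\<lambda>p. snd (Ds G p))" by (rule Ck_linear[OF oUU bounded_linear_snd Ck_Gs])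
  show ?thesis unfolding kB_def[abs_def] by (rule Ck_mult[OF oUU a e])
qed

lemma cJ0: "convex J0" by (rule convex_real_interval)

lemma Ck_aa: "Ck_on n J0 aa"
  unfolding aa_def[abs_def] by (rule Ck_param_int[OF oUU Ck_kA oJ0 cJ0 UU_mem2])
lemma Ck_bb: "Ck_on n J0 bb"
  unfolding bb_def[abs_def] by (rule Ck_param_int[OF oUU Ck_kB oJ0 cJ0 UU_mem2])

lemma exists_ynz: "\<exists>s1 \<in> {L/2<..<3*L/2}. snd (Ds G (s1, 0)) \<noteq> 0"
proof (rule ccontr)
  assume "\<not> ?thesis"
  then have z: "\<And>s. s \<in> {L/2<..<3*L/2} \<Longrightarrow> snd (Ds G (s, 0)) = 0" by auto
  have LL: "L \<in> {L/2<..<3*L/2}" using L by simp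
  have LII: "L \<in> II" using L d by simp
  have d1: "((\<lambda>s. snd (Ds G (s, 0))) has_vector_derivative snd (Ds (Ds G) (L, 0))) (at L)"
    by (rule vd_snd[OF hGs_s[OF mapII[OF LII]]])
  have d2: "((\<lambda>s. 0::real) has_vector_derivative 0) (at L)" by (rule has_vector_derivative_const)
  have "snd (Ds (Ds G) (L, 0)) = 0"
    by (rule vd_eq_on_open[OF d1 d2 _ LL]) (auto intro: z)
  moreover have "snd (Ds G (L, 0)) = 0" using z[OF LL] .
  moreover have "inner (Ds G (L, 0)) (perp (Ds (Ds G) (L, 0))) > 0" using curvG[of L] L by simp
  ultimately show False by (simp add: inner_perp)
qed

lemma bb0_pos: "bb 0 > 0"
proof -
  obtain s1 where s1: "s1 \<in> {L/2<..<3*L/2}" "snd (Ds G (s1, 0)) \<noteq> 0" using exists_ynz by blast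
  have eq: "kB (s, 0) = bump (L/2) (3*L/2) s * (snd (Ds G (s, 0)))^2" for s
    by (simp add: kB_def eta_def power2_eq_square)
  have cont: "continuous_on {0..2*L} (\<lambda>s. kB (s, 0))"
    by (rule cont_slice_s[OF Ck_cont[OF Ck_kB]]) (use UU_mem2 zero_J0 in blast)
  have nn: "kB (s, 0) \<ge> 0" for s unfolding eq by (intro mult_nonneg_nonneg bump_nonneg) simp
  have "kB (s1, 0) > 0" unfolding eq using s1 by (intro mult_pos_pos bump_pos) auto
  moreover have "s1 \<in> {0..2*L}" using s1 L by auto
  ultimately have "integral {0..2*L} (\<lambda>s. kB (s, 0)) \<noteq> 0"
    using integral_eq_0_iff[OF cont] L nn by fastforce
  moreover have "integral {0..2*L} (\<lambda>s. kB (s, 0)) \<ge> 0"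
    by (rule integral_nonneg[OF integrable_continuous_interval[OF cont]]) (rule nn)
  ultimately show ?thesis by (simp add: bb_def)
qed

end


context mt begin

lemma aa0: "aa 0 = area L \<gamma>"
proof -
  have "area L \<gamma> = (1/2) * integral {0..2*L} (\<lambda>s. fst (G (s, 0)) * snd (Ds G (s, 0)) - fst (Ds G (s, 0)) * snd (G (s, 0)))"
    unfolding area_def by (rule arg_cong[where f="\<lambda>x. (1/2) * x"], rule integral_cong) (simp add: gam gd)
  also have "\<dots> = aa 0" by (simp add: aa_def kA_def)
  finally show ?thesis by simp
qed

lemma Gt_end0: "Dt G (0, 0) = 0"
proof -
  have m: "(0, 0) \<in> UU" using L d zero_J0 by simp
  have d1: "((\<lambda>t. G (0, t)) has_vector_derivative Dt G (0, 0)) (at 0)" by (rule hG_t[OF m])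
  have d2: "((\<lambda>t. (x0, 0)) has_vector_derivative 0) (at 0)" by (rule has_vector_derivative_const)
  show ?thesis
  proof (rule vd_eq_on_open[OF d1 d2 oJ0 zero_J0])
    fix t assume t: "t \<in> J0"
    then have "t \<in> {-tV..tV}" by auto
    then have "V (0, t) = (x0, 0)" using Vt_adm[of t] by (simp add: admissible_def)
    then show "G (0, t) = (x0, 0)" using GV[of 0 t] L \<open>t \<in> {-tV..tV}\<close> by simp
  qed
qed

lemma Gt_end2L: "Dt G (2*L, 0) = 0"
proof -
  have m: "(2*L, 0) \<in> UU" using L d zero_J0 by simp
  have d1: "((\<lambda>t. G (2*L, t)) has_vector_derivative Dt G (2*L, 0)) (at 0)" by (rule hG_t[OF m])
  have d2: "((\<lambda>t. (-x0, 0)) has_vector_derivative 0) (at 0)" by (rule has_vector_derivative_const)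
  show ?thesis
  proof (rule vd_eq_on_open[OF d1 d2 oJ0 zero_J0])
    fix t assume t: "t \<in> J0"
    then have "t \<in> {-tV..tV}" by auto
    then have "V (2*L, t) = (-x0, 0)" using Vt_adm[of t] by (simp add: admissible_def)
    then show "G (2*L, t) = (-x0, 0)" using GV[of "2*L" t] L \<open>t \<in> {-tV..tV}\<close> by simp
  qed
qed

lemma velV: assumes "s \<in> {0..2*L}" shows "velocity V tV s = Dt G (s, 0)"
proof -
  have m: "(s, 0) \<in> UU" using UU_mem2[OF assms zero_J0] .
  have "((\<lambda>t. G (s, t)) has_vector_derivative Dt G (s, 0)) (at 0 within {-tV..tV})" by (rule hG_t[OF m])
  then have "((\<lambda>t. V (s, t)) has_vector_derivative Dt G (s, 0)) (at 0 within {-tV..tV})"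
    by (rule has_vector_derivative_transform[rotated 2]) (use tV GV assms in auto)
  then show ?thesis unfolding velocity_def
    by (rule vector_derivative_within_closed_interval[rotated 2]) (use tV in auto)
qed

definition "kAt p = ((fst (G p) * snd (Dt (Ds G) p) + fst (Dt G p) * snd (Ds G p))
                     - (fst (Ds G p) * snd (Dt G p) + fst (Dt (Ds G) p) * snd (G p))) / 2"

lemma Ck_kAt: "Ck_on n UU kAt"
proof -
  have a: "Ck_on n UU (\<lambda>p. fst (G p))" by (rule Ck_linear[OF oUU bounded_linear_fst Ck_G])
  have b: "Ck_on n UU (\<lambda>p. snd (G p))" by (rule Ck_linear[OF oUU bounded_linear_snd Ck_G])
  have c: "Ck_on n UU (\<lambda>p. fst (Ds G p))" by (rule Ck_linear[OF oUU bounded_linear_fst Ck_Gs])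
  have e: "Ck_on n UU (\<lambda>p. snd (Ds G p))" by (rule Ck_linear[OF oUU bounded_linear_snd Ck_Gs])
  have f: "Ck_on n UU (\<lambda>p. fst (Dt G p))" by (rule Ck_linear[OF oUU bounded_linear_fst Ck_Gt])
  have g: "Ck_on n UU (\<lambda>p. snd (Dt G p))" by (rule Ck_linear[OF oUU bounded_linear_snd Ck_Gt])
  have h: "Ck_on n UU (\<lambda>p. fst (Dt (Ds G) p))" by (rule Ck_linear[OF oUU bounded_linear_fst Ck_Gst])
  have i: "Ck_on n UU (\<lambda>p. snd (Dt (Ds G) p))" by (rule Ck_linear[OF oUU bounded_linear_snd Ck_Gst])
  have "Ck_on n UU (\<lambda>p. (fst (G p) * snd (Dt (Ds G) p) + fst (Dt G p) * snd (Ds G p))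
                     - (fst (Ds G p) * snd (Dt G p) + fst (Dt (Ds G) p) * snd (G p)))"
    by (intro Ck_diff[OF oUU] Ck_add[OF oUU] Ck_mult[OF oUU] a b c e f g h i)
  then show ?thesis unfolding kAt_def[abs_def] by (rule Ck_linear[OF oUU bounded_linear_divide])
qed

lemma h_kA: assumes "(s, t) \<in> UU" shows "((\<lambda>t. kA (s, t)) has_vector_derivative kAt (s, t)) (at t within S)"
proof -
  have A: "((\<lambda>t. fst (G (s, t)) * snd (Ds G (s, t))) has_vector_derivative
      fst (G (s, t)) * snd (Dt (Ds G) (s, t)) + fst (Dt G (s, t)) * snd (Ds G (s, t))) (at t within S)"
    by (rule has_vector_derivative_mult[OF vd_fst[OF hG_t[OF assms]] vd_snd[OF hGs_t[OF assms]]])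
  have B: "((\<lambda>t. fst (Ds G (s, t)) * snd (G (s, t))) has_vector_derivative
      fst (Ds G (s, t)) * snd (Dt G (s, t)) + fst (Dt (Ds G) (s, t)) * snd (G (s, t))) (at t within S)"
    by (rule has_vector_derivative_mult[OF vd_fst[OF hGs_t[OF assms]] vd_snd[OF hG_t[OF assms]]])
  show ?thesis unfolding kA_def kAt_def
    by (rule bounded_linear.has_vector_derivative[OF bounded_linear_divide has_vector_derivative_diff[OF A B]])
qed

lemma aa_deriv: "(aa has_vector_derivative integral {0..2*L} (\<lambda>s. kAt (s, 0))) (at 0)"
proof -
  have "((\<lambda>t. integral (cbox 0 (2*L)) (\<lambda>s. kA (s, t))) has_vector_derivative integral (cbox 0 (2*L)) (\<lambda>s. kAt (s, 0))) (at 0 within J0)"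
  proof (rule leibniz_rule_vector_derivative[of J0 0 "2*L" "\<lambda>t s. kA (s, t)" "\<lambda>t s. kAt (s, t)"])
    show "((\<lambda>x. kA (s, x)) has_vector_derivative kAt (s, x)) (at x within J0)"
      if "x \<in> J0" "s \<in> cbox 0 (2*L)" for x s
      by (rule h_kA) (use that UU_mem2 in auto)
    show "(\<lambda>s. kA (s, x)) integrable_on cbox 0 (2*L)" if "x \<in> J0" for x
    proof -
      have "continuous_on {0..2*L} (\<lambda>s. kA (s, x))"
        by (rule cont_slice_s[OF Ck_cont[OF Ck_kA]]) (use that UU_mem2 in auto)
      then show ?thesis by (simp add: integrable_continuous_interval)
    qed
    have "continuous_on (J0 \<times> {0..2*L}) (\<lambda>(x, t). kAt (t, x))"
      by (rule cont_swap_comp[OF Ck_cont[OF Ck_kAt]]) (use UU_mem2 in auto)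
    then show "continuous_on (J0 \<times> cbox 0 (2*L)) (\<lambda>(x, t). kAt (t, x))" by simp
    show "0 \<in> J0" by (rule zero_J0)
    show "convex J0" by (rule cJ0)
  qed
  then show ?thesis
    unfolding at_within_open[OF zero_J0 oJ0] cbox_interval aa_def[abs_def] .
qed

lemma aa_deriv0: "integral {0..2*L} (\<lambda>s. kAt (s, 0)) = 0"
proof -
  define R where "R s = fst (G (s, 0)) * snd (Dt G (s, 0)) - fst (Dt G (s, 0)) * snd (G (s, 0))" for s
  define R' where "R' s = (fst (G (s, 0)) * snd (Ds (Dt G) (s, 0)) + fst (Ds G (s, 0)) * snd (Dt G (s, 0)))
       - (fst (Dt G (s, 0)) * snd (Ds G (s, 0)) + fst (Ds (Dt G) (s, 0)) * snd (G (s, 0)))" for s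
  define Q where "Q s = fst (Dt G (s, 0)) * snd (Ds G (s, 0)) - fst (Ds G (s, 0)) * snd (Dt G (s, 0))" for s
  have m: "s \<in> {0..2*L} \<Longrightarrow> (s, 0) \<in> UU" for s using UU_mem2 zero_J0 by blast
  have hR: "(R has_vector_derivative R' s) (at s within {0..2*L})" if "s \<in> {0..2*L}" for s
  proof -
    have A: "((\<lambda>s. fst (G (s, 0)) * snd (Dt G (s, 0))) has_vector_derivative
        fst (G (s, 0)) * snd (Ds (Dt G) (s, 0)) + fst (Ds G (s, 0)) * snd (Dt G (s, 0))) (at s within {0..2*L})"
      by (rule has_vector_derivative_mult[OF vd_fst[OF hG_s[OF m[OF that]]] vd_snd[OF hGt_s[OF m[OF that]]]])
    have B: "((\<lambda>s. fst (Dt G (s, 0)) * snd (G (s, 0))) has_vector_derivative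
        fst (Dt G (s, 0)) * snd (Ds G (s, 0)) + fst (Ds (Dt G) (s, 0)) * snd (G (s, 0))) (at s within {0..2*L})"
      by (rule has_vector_derivative_mult[OF vd_fst[OF hGt_s[OF m[OF that]]] vd_snd[OF hG_s[OF m[OF that]]]])
    show ?thesis unfolding R_def[abs_def] R'_def by (rule has_vector_derivative_diff[OF A B])
  qed
  have R0: "R 0 = 0" by (simp add: R_def Gt_end0)
  have R2: "R (2*L) = 0" by (simp add: R_def Gt_end2L)
  have iR: "(R' has_integral 0) {0..2*L}"
    using fundamental_theorem_of_calculus[of 0 "2*L" R R'] hR L R0 R2 by simp
  have iQ: "(Q has_integral 0) {0..2*L}"
  proof -
    have "integral {0..2*L} Q = integral {0..2*L} (\<lambda>s. inner (velocity V tV s) (normal L \<gamma> s))"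
    proof (rule integral_cong)
      fix s assume s: "s \<in> {0..2*L}"
      show "Q s = inner (velocity V tV s) (normal L \<gamma> s)"
        using unitG[OF s] by (simp add: velV[OF s] normal_def gd[OF s] Q_def inner_perp)
    qed
    also have "\<dots> = 0" using fo by (simp add: first_order_area_preserving_def)
    finally have "integral {0..2*L} Q = 0" .
    moreover have "Q integrable_on {0..2*L}"
    proof -
      have a: "continuous_on UU (\<lambda>p. fst (Dt G p) * snd (Ds G p) - fst (Ds G p) * snd (Dt G p))"
        by (intro Ck_cont[of 0] Ck_diff[OF oUU] Ck_mult[OF oUU] Ck_linear[OF oUU bounded_linear_fst]
            Ck_linear[OF oUU bounded_linear_snd] Ck_Gt Ck_Gs)
      have "continuous_on {0..2*L} Q"
        unfolding Q_def by (rule cont_slice_s[OF a]) (use m in auto)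
      then show ?thesis by (simp add: integrable_continuous_interval)
    qed
    ultimately show ?thesis using integrable_integral by fastforce
  qed
  have "((\<lambda>s. R' s / 2 + Q s) has_integral 0 / 2 + 0) {0..2*L}"
    by (rule has_integral_add[OF has_integral_divide[OF iR] iQ])
  moreover have "R' s / 2 + Q s = kAt (s, 0)" if "s \<in> {0..2*L}" for s
    using sym_G[OF m[OF that]] by (simp add: R'_def Q_def kAt_def field_simps)
  ultimately have "((\<lambda>s. kAt (s, 0)) has_integral 0) {0..2*L}"
    using has_integral_cong by (metis (no_types, lifting) add_0 div_0)
  then show ?thesis by (rule integral_unique)
qed

end


context mt begin

definition "hh t = (area L \<gamma> - aa t) / bb t"
definition "EE p = G p + (hh (snd p) * eta (fst p), 0)"
definition "ee1 p = Ds G p + (hh (snd p) * eta1 (fst p), 0)"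
definition "ee2 p = Ds (Ds G) p + (hh (snd p) * eta2 (fst p), 0)"

lemma hh0: "hh 0 = 0" by (simp add: hh_def aa0)

lemma hh_deriv: "(hh has_real_derivative 0) (at 0)"
proof -
  have a: "(aa has_real_derivative 0) (at 0)"
    using aa_deriv aa_deriv0 by (simp add: has_real_derivative_iff_has_vector_derivative)
  have b: "(bb has_real_derivative D1 bb 0) (at 0)"
    using hvd_1[OF oJ0 Ck_bb zero_J0] by (simp add: has_real_derivative_iff_has_vector_derivative)
  have c: "((\<lambda>t. area L \<gamma> - aa t) has_real_derivative 0 - 0) (at 0)"
    by (rule DERIV_diff[OF DERIV_const a])
  have "((\<lambda>t. (area L \<gamma> - aa t) / bb t) has_real_derivative
      ((0 - 0) * bb 0 - (area L \<gamma> - aa 0) * D1 bb 0) / (bb 0 * bb 0)) (at 0)"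
    by (rule DERIV_divide[OF c b]) (use bb0_pos in simp)
  then show ?thesis by (simp add: hh_def[abs_def] aa0)
qed

lemma tau_exists: "\<exists>tau. 0 < tau \<and> tau \<le> tV \<and> (\<forall>t. \<bar>t\<bar> < tau \<longrightarrow> bb t > 0)"
proof -
  have "isCont bb 0"
    using Ck_cont[OF Ck_bb[of 0]] continuous_on_eq_continuous_at[OF oJ0] zero_J0 by blast
  then have "(bb \<longlongrightarrow> bb 0) (at 0)" unfolding isCont_def .
  then have "\<forall>\<^sub>F t in at 0. bb t > 0" using bb0_pos by (rule order_tendstoD(1))
  then obtain r where r0: "r > 0" "\<And>t. t \<noteq> 0 \<Longrightarrow> dist t 0 < r \<Longrightarrow> bb t > 0"
    unfolding eventually_at by auto
  have r: "r > 0" "\<And>t. dist t 0 < r \<Longrightarrow> bb t > 0"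
  proof -
    show "r > 0" by (rule r0(1))
    fix t :: real assume "dist t 0 < r"
    then show "bb t > 0" using r0(2)[of t] bb0_pos by (cases "t = 0") auto
  qed
  show ?thesis using r tV by (intro exI[of _ "min r tV"]) (auto simp: dist_real_def)
qed

end

locale mt2 = mt +
  fixes tau :: real
  assumes tau: "0 < tau" "tau \<le> tV" "\<And>t. \<bar>t\<bar> < tau \<Longrightarrow> bb t > 0"
begin

abbreviation "J1 \<equiv> {-tau<..<tau}"
abbreviation "U1 \<equiv> II \<times> J1"
lemma oJ1: "open J1" by simp
lemma oU1: "open U1" by (intro open_Times) simp_all
lemma U1_sub: "U1 \<subseteq> UU" using tau by auto
lemma U1_mem: "s \<in> {0..2*L} \<Longrightarrow> \<bar>t\<bar> < tau \<Longrightarrow> (s, t) \<in> U1" using II_sub by auto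

lemma Ck_hh: "Ck_on n J1 hh"
proof -
  have J1J0: "J1 \<subseteq> J0" using tau by auto
  have a: "Ck_on n J1 (\<lambda>t. area L \<gamma> - aa t)"
    by (rule Ck_diff[OF oJ1 Ck_const Ck_subset[OF Ck_aa oJ1 J1J0]])
  have nz: "bb t \<noteq> 0" if "t \<in> J1" for t
  proof -
    have "\<bar>t\<bar> < tau" using that by auto
    then show ?thesis using tau(3) by force
  qed
  have b: "Ck_on n J1 (\<lambda>t. inverse (bb t))"
    by (rule Ck_inverse[OF oJ1 Ck_subset[OF Ck_bb oJ1 J1J0] nz])
  have "Ck_on n J1 (\<lambda>t. (area L \<gamma> - aa t) * inverse (bb t))" by (rule Ck_mult[OF oJ1 a b])
  then show ?thesis unfolding hh_def[abs_def] by (simp add: divide_inverse)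
qed

lemma Ck_corr:
  fixes F :: "real \<times> real \<Rightarrow> real \<times> real"
  assumes F: "Ck_on n U1 F" and k: "Ck_on n II k"
  shows "Ck_on n U1 (\<lambda>p. F p + (hh (snd p) * k (fst p), 0))"
proof -
  have a: "Ck_on n U1 (\<lambda>p. hh (snd p))"
    by (rule Ck_compose[OF oU1 oJ1 _ Ck_hh Ck_lin_map[OF oU1 bounded_linear_snd]]) auto
  have b: "Ck_on n U1 (\<lambda>p. k (fst p))"
    by (rule Ck_compose[OF oU1 oII _ k Ck_lin_map[OF oU1 bounded_linear_fst]]) auto
  have c0: "Ck_on n U1 (\<lambda>p. hh (snd p) * k (fst p))" by (rule Ck_mult[OF oU1 a b])
  have c: "Ck_on n U1 (\<lambda>p. (hh (snd p) * k (fst p), 0::real))"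
    using Ck_linear[OF oU1 bl_pair0 c0] by simp
  show ?thesis by (rule Ck_add[OF oU1 F c])
qed

lemma Ck_EE: "Ck_on n U1 EE"
  unfolding EE_def[abs_def] by (rule Ck_corr[OF Ck_subset[OF Ck_G oU1 U1_sub] Ck_eta])
lemma Ck_ee1: "Ck_on n U1 ee1"
  unfolding ee1_def[abs_def] by (rule Ck_corr[OF Ck_subset[OF Ck_Gs oU1 U1_sub] Ck_eta1])
lemma Ck_ee2: "Ck_on n U1 ee2"
  unfolding ee2_def[abs_def] by (rule Ck_corr[OF Ck_subset[OF Ck_Gss oU1 U1_sub] Ck_eta2])

lemma h_EE: assumes "(s, t) \<in> U1" shows "((\<lambda>s. EE (s, t)) has_vector_derivative ee1 (s, t)) (at s within S)"
proof -
  have sI: "s \<in> II" using assms by simp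
  have "((\<lambda>s. (hh t * eta s, 0::real)) has_vector_derivative (hh t * eta1 s, 0)) (at s within S)"
    by (rule has_vector_derivative_Pair[OF bounded_linear.has_vector_derivative[OF bounded_linear_mult_right h_eta[OF sI]] has_vector_derivative_const])
  from has_vector_derivative_add[OF hG_s[OF subsetD[OF U1_sub assms]] this]
  show ?thesis by (simp add: EE_def ee1_def)
qed

lemma h_ee1: assumes "(s, t) \<in> U1" shows "((\<lambda>s. ee1 (s, t)) has_vector_derivative ee2 (s, t)) (at s within S)"
proof -
  have sI: "s \<in> II" using assms by simp
  have "((\<lambda>s. (hh t * eta1 s, 0::real)) has_vector_derivative (hh t * eta2 s, 0)) (at s within S)"
    by (rule has_vector_derivative_Pair[OF bounded_linear.has_vector_derivative[OF bounded_linear_mult_right h_eta1[OF sI]] has_vector_derivative_const])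
  from has_vector_derivative_add[OF hGs_s[OF subsetD[OF U1_sub assms]] this]
  show ?thesis by (simp add: ee1_def ee2_def)
qed

lemma EE0: "EE (s, 0) = G (s, 0)" by (simp add: EE_def hh0 zero_prod_def)
lemma ee10: "ee1 (s, 0) = Ds G (s, 0)" by (simp add: ee1_def hh0 zero_prod_def)
lemma ee20: "ee2 (s, 0) = Ds (Ds G) (s, 0)" by (simp add: ee2_def hh0 zero_prod_def)

abbreviation "T \<equiv> tau / 2"
lemma T: "T > 0" using tau by simp
lemma rect_U1: "{0..2*L} \<times> {-T..T} \<subseteq> U1"
proof (rule subsetI)
  fix p assume "p \<in> {0..2*L} \<times> {-T..T}"
  then obtain s t where p: "p = (s, t)" "s \<in> {0..2*L}" "t \<in> {-T..T}" by blast
  have "s \<in> II" using p(2) II_sub by blast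
  moreover have "t \<in> J1" using p(3) tau(1) by simp
  ultimately show "p \<in> U1" using p(1) by simp
qed

lemma curv_persist:
  obtains \<delta> where "\<delta> > 0" "\<delta> \<le> T" "\<And>s t. s \<in> {0..2*L} \<Longrightarrow> \<bar>t\<bar> \<le> \<delta> \<Longrightarrow> inner (ee1 (s, t)) (perp (ee2 (s, t))) > 0"
proof -
  have c: "continuous_on U1 (\<lambda>p. inner (ee1 p) (perp (ee2 p)))"
    by (rule continuous_on_inner[OF Ck_cont[OF Ck_ee1] bounded_linear.continuous_on[OF bl_perp Ck_cont[OF Ck_ee2]]])
  have c2: "continuous_on ({0..2*L} \<times> {-T..T}) (\<lambda>p. inner (ee1 p) (perp (ee2 p)))"
    by (rule continuous_on_subset[OF c rect_U1])
  have pos: "\<And>s. s \<in> {0..2*L} \<Longrightarrow> inner (ee1 (s, 0)) (perp (ee2 (s, 0))) > 0"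
    unfolding ee10 ee20 by (rule curvG)
  have L0: "0 \<le> 2*L" using L by simp
  from pos_persist[OF c2 T L0 pos] obtain \<delta> where
    dd: "\<delta> > 0" "\<delta> \<le> T" "\<And>s t. s \<in> {0..2*L} \<Longrightarrow> \<bar>t\<bar> \<le> \<delta> \<Longrightarrow> inner (ee1 (s, t)) (perp (ee2 (s, t))) > 0"
    by blast
  show ?thesis by (rule that[OF dd(1,2) dd(3)])
qed

lemma inj_persist2:
  obtains \<delta> where "\<delta> > 0" "\<delta> \<le> T" "\<And>t. \<bar>t\<bar> \<le> \<delta> \<Longrightarrow> inj_on (\<lambda>s. EE (s, t)) {0..2*L}"
proof -
  have L2: "0 < 2*L" using L by simp
  have ce: "continuous_on ({0..2*L} \<times> {-T..T}) EE"
    by (rule continuous_on_subset[OF Ck_cont[OF Ck_EE] rect_U1])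
  have ce1: "continuous_on ({0..2*L} \<times> {-T..T}) ee1"
    by (rule continuous_on_subset[OF Ck_cont[OF Ck_ee1] rect_U1])
  have der: "((\<lambda>s. EE (s, t)) has_vector_derivative ee1 (s, t)) (at s within {0..2*L})"
    if "s \<in> {0..2*L}" "t \<in> {-T..T}" for s t
    by (rule h_EE) (use that rect_U1 in blast)
  have inj: "inj_on (\<lambda>s. EE (s, 0)) {0..2*L}"
  proof -
    have "inj_on \<gamma> {0..2*L}" using adm by (simp add: admissible_def)
    moreover have "inj_on \<gamma> {0..2*L} = inj_on (\<lambda>s. EE (s, 0)) {0..2*L}"
      by (rule inj_on_cong) (simp add: EE0 gam)
    ultimately show ?thesis by simp
  qed
  have unit: "\<And>s. s \<in> {0..2*L} \<Longrightarrow> norm (ee1 (s, 0)) = 1" by (simp add: ee10 unitG)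
  show ?thesis by (rule inj_persist[OF L2 T ce ce1 der inj unit that])
qed

end


context mt begin
definition "WW p = V p + (hh (snd p) * eta (fst p), 0)"

lemma accel_V:
  assumes t1: "0 < t1" "t1 \<le> tV" and s: "s \<in> {0..2*L}"
  shows "acceleration V t1 s = Dt (Dt G) (s, 0)"
proof -
  define F where "F t = vector_derivative (\<lambda>\<tau>. V (s, \<tau>)) (at t within {-t1..t1})" for t
  have Fin: "F t = Dt G (s, t)" if t: "t \<in> {-t1<..<t1}" for t
  proof -
    have "t \<in> J0" using t t1 by auto
    then have m: "(s, t) \<in> UU" by (rule UU_mem2[OF s])
    have "((\<lambda>\<tau>. G (s, \<tau>)) has_vector_derivative Dt G (s, t)) (at t)" by (rule hG_t[OF m])
    then have "((\<lambda>\<tau>. V (s, \<tau>)) has_vector_derivative Dt G (s, t)) (at t)"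
      by (rule has_vector_derivative_transform_within_open[of _ _ _ "{-t1<..<t1}"]) (use t t1 GV s in auto)
    moreover have "at t within {-t1..t1} = at t"
      by (rule at_within_interior) (use t in auto)
    ultimately show ?thesis unfolding F_def by (simp add: vector_derivative_at)
  qed
  have m0: "(s, 0) \<in> UU" using UU_mem2[OF s zero_J0] .
  have "((\<lambda>t. Dt G (s, t)) has_vector_derivative Dt (Dt G) (s, 0)) (at 0)" by (rule hGt_t[OF m0])
  then have "(F has_vector_derivative Dt (Dt G) (s, 0)) (at 0)"
    by (rule has_vector_derivative_transform_within_open[of _ _ _ "{-t1<..<t1}"]) (use t1 Fin in auto)
  then have "(F has_vector_derivative Dt (Dt G) (s, 0)) (at 0 within {-t1..t1})"
    by (rule has_vector_derivative_at_within)
  then have "vector_derivative F (at 0 within {-t1..t1}) = Dt (Dt G) (s, 0)"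
    by (rule vector_derivative_within_closed_interval[rotated 2]) (use t1 in auto)
  then show ?thesis unfolding acceleration_def F_def[abs_def] .
qed
end

locale mt3 = mt2 +
  fixes tW :: real
  assumes tW: "0 < tW" "tW \<le> T"
    and curvW: "\<And>s t. s \<in> {0..2*L} \<Longrightarrow> \<bar>t\<bar> \<le> tW \<Longrightarrow> inner (ee1 (s, t)) (perp (ee2 (s, t))) > 0"
    and injW: "\<And>t. \<bar>t\<bar> \<le> tW \<Longrightarrow> inj_on (\<lambda>s. EE (s, t)) {0..2*L}"
begin

lemma tW_tau: "tW < tau" using tW tau by simp
lemma tW_tV: "tW < tV" using tW_tau tau by simp

lemma WE: assumes s: "s \<in> {0..2*L}" and t: "\<bar>t\<bar> \<le> tW" shows "WW (s, t) = EE (s, t)"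
proof -
  have "t \<in> {-tV..tV}" using t tW_tV by auto
  then show ?thesis by (simp add: WW_def EE_def GV[OF s])
qed

lemma inU1: assumes s: "s \<in> {0..2*L}" and t: "\<bar>t\<bar> \<le> tW" shows "(s, t) \<in> U1"
proof -
  have "\<bar>t\<bar> < tau" using t tW_tau by simp
  then show ?thesis by (rule U1_mem[OF s])
qed

lemma dW: assumes t: "\<bar>t\<bar> \<le> tW" and s: "s \<in> {0..2*L}"
  shows "d1 L (\<lambda>s. WW (s, t)) s = ee1 (s, t)" "d2 L (\<lambda>s. WW (s, t)) s = ee2 (s, t)"
proof -
  have A: "x \<in> {0..2*L} \<Longrightarrow> ((\<lambda>s. EE (s, t)) has_vector_derivative ee1 (x, t)) (at x within {0..2*L})" for x
    by (rule h_EE[OF inU1[OF _ t]])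
  have B: "x \<in> {0..2*L} \<Longrightarrow> ((\<lambda>s. ee1 (s, t)) has_vector_derivative ee2 (x, t)) (at x within {0..2*L})" for x
    by (rule h_ee1[OF inU1[OF _ t]])
  have C: "x \<in> {0..2*L} \<Longrightarrow> WW (x, t) = EE (x, t)" for x using WE t by simp
  show "d1 L (\<lambda>s. WW (s, t)) s = ee1 (s, t)"
    by (rule curve_d12(1)[OF L, of "\<lambda>s. WW (s, t)" "\<lambda>s. EE (s, t)" "\<lambda>s. ee1 (s, t)" "\<lambda>s. ee2 (s, t)"]) (use A B C s in auto)
  show "d2 L (\<lambda>s. WW (s, t)) s = ee2 (s, t)"
    by (rule curve_d12(2)[OF L, of "\<lambda>s. WW (s, t)" "\<lambda>s. EE (s, t)" "\<lambda>s. ee1 (s, t)" "\<lambda>s. ee2 (s, t)"]) (use A B C s in auto)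
qed

lemma adm_t: assumes t: "\<bar>t\<bar> \<le> tW" shows "admissible L x0 (\<lambda>s. WW (s, t))"
proof -
  have tJ1: "t \<in> J1" using t tW_tau by auto
  have tV': "t \<in> {-tV..tV}" using t tW_tV by auto
  have sm: "smooth_on_set {0..2*L} (\<lambda>s. WW (s, t))"
    unfolding smooth_on_set_def
  proof (intro exI conjI)
    show "open II" by (rule oII)
    show "{0..2*L} \<subseteq> II" by (rule II_sub)
    show "Cinf_on II (\<lambda>s. EE (s, t))" unfolding Cinf_on_def
    proof (intro conjI allI oII)
      fix n
      have i: "Ck_on n II (\<lambda>s. (s, t))"
        using Ck_add[OF oII Ck_lin_map[OF oII bl_pair0] Ck_const[of n II "(0, t)"]] by simp
      show "Ck_on n II (\<lambda>s. EE (s, t))"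
        by (rule Ck_compose[OF oII oU1 _ Ck_EE i]) (use tJ1 in auto)
    qed
    show "\<forall>s\<in>{0..2*L}. EE (s, t) = WW (s, t)" using WE t by simp
  qed
  have cpos: "s \<in> {0..2*L} \<Longrightarrow> inner (ee1 (s, t)) (perp (ee2 (s, t))) > 0" for s using curvW t by simp
  have nz: "d1 L (\<lambda>s. WW (s, t)) s \<noteq> 0" if s: "s \<in> {0..2*L}" for s
  proof
    assume "d1 L (\<lambda>s. WW (s, t)) s = 0"
    then have "ee1 (s, t) = 0" using dW[OF t s] by simp
    then show False using cpos[OF s] by simp
  qed
  have cv: "curvature L (\<lambda>s. WW (s, t)) s > 0" if s: "s \<in> {0..2*L}" for s
  proof -
    have "norm (ee1 (s, t)) > 0" using nz[OF s] dW[OF t s] by simp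
    then show ?thesis unfolding curvature_def dW[OF t s] using cpos[OF s] by simp
  qed
  have inj: "inj_on (\<lambda>s. WW (s, t)) {0..2*L}"
  proof -
    have "inj_on (\<lambda>s. EE (s, t)) {0..2*L} = inj_on (\<lambda>s. WW (s, t)) {0..2*L}"
      by (rule inj_on_cong) (use WE t in simp)
    then show ?thesis using injW[OF t] by simp
  qed
  have Vadm: "admissible L x0 (\<lambda>s. V (s, t))" by (rule Vt_adm[OF tV'])
  have e0: "WW (0, t) = (x0, 0)" using Vadm by (simp add: WW_def eta_0 admissible_def)
  have e2: "WW (2*L, t) = (-x0, 0)" using Vadm by (simp add: WW_def eta_2L admissible_def)
  have pos: "\<forall>s\<in>{0<..<2*L}. snd (WW (s, t)) > 0" using Vadm by (simp add: WW_def admissible_def)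
  show ?thesis unfolding admissible_def using sm nz cv inj e0 e2 pos by blast
qed

lemma av_W: "admissible_variation L x0 \<gamma> WW tW"
  unfolding admissible_variation_def
proof (intro conjI ballI)
  show "tW > 0" by (rule tW(1))
  show "smooth_on_set ({0..2*L} \<times> {-tW..tW}) WW"
    unfolding smooth_on_set_def
  proof (intro exI conjI)
    show "open U1" by (rule oU1)
    show "{0..2*L} \<times> {-tW..tW} \<subseteq> U1"
    proof (rule subsetI)
      fix p assume "p \<in> {0..2*L} \<times> {-tW..tW}"
      then obtain s t where p: "p = (s, t)" "s \<in> {0..2*L}" "\<bar>t\<bar> \<le> tW" by auto
      show "p \<in> U1" unfolding p(1) by (rule inU1[OF p(2,3)])
    qed
    show "Cinf_on U1 EE" unfolding Cinf_on_def using oU1 Ck_EE by blast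
    show "\<forall>p\<in>{0..2*L} \<times> {-tW..tW}. EE p = WW p" using WE by auto
  qed
  fix s assume "s \<in> {0..2*L}"
  then show "WW (s, 0) = \<gamma> s" using V0 by (simp add: WW_def hh0 zero_prod_def)
next
  fix t assume "t \<in> {-tW..tW}"
  then show "admissible L x0 (\<lambda>s. WW (s, t))" by (intro adm_t) auto
qed

end


context mt3 begin

lemma area_W: assumes t: "\<bar>t\<bar> \<le> tW" shows "area L (\<lambda>s. WW (s, t)) = area L \<gamma>"
proof -
  have tJ0: "t \<in> J0" using t tW_tV by auto
  have m: "s \<in> {0..2*L} \<Longrightarrow> (s, t) \<in> UU" for s using UU_mem2 tJ0 by blast
  have bnz: "bb t \<noteq> 0" using tau(3)[of t] t tW_tau by simp
  define Pp where "Pp s = eta s * snd (G (s, t))" for s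
  define Pp' where "Pp' s = eta s * snd (Ds G (s, t)) + eta1 s * snd (G (s, t))" for s
  have hP: "(Pp has_vector_derivative Pp' s) (at s within {0..2*L})" if s: "s \<in> {0..2*L}" for s
  proof -
    have sI: "s \<in> II" using s II_sub by blast
    show ?thesis unfolding Pp_def[abs_def] Pp'_def
      by (rule has_vector_derivative_mult[OF h_eta[OF sI] vd_snd[OF hG_s[OF m[OF s]]]])
  qed
  have iP: "(Pp' has_integral 0) {0..2*L}"
    using fundamental_theorem_of_calculus[of 0 "2*L" Pp Pp'] hP L by (simp add: Pp_def eta_0 eta_2L)
  have iA: "((\<lambda>s. kA (s, t)) has_integral aa t) {0..2*L}"
  proof -
    have "continuous_on {0..2*L} (\<lambda>s. kA (s, t))"
      by (rule cont_slice_s[OF Ck_cont[OF Ck_kA]]) (use m in auto)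
    then show ?thesis unfolding aa_def by (intro integrable_integral integrable_continuous_interval)
  qed
  have iB: "((\<lambda>s. kB (s, t)) has_integral bb t) {0..2*L}"
  proof -
    have "continuous_on {0..2*L} (\<lambda>s. kB (s, t))"
      by (rule cont_slice_s[OF Ck_cont[OF Ck_kB]]) (use m in auto)
    then show ?thesis unfolding bb_def by (intro integrable_integral integrable_continuous_interval)
  qed
  have iAll: "((\<lambda>s. 2 * kA (s, t) + 2 * hh t * kB (s, t) - hh t * Pp' s) has_integral
      (2 * aa t + 2 * hh t * bb t - hh t * 0)) {0..2*L}"
    by (intro has_integral_diff has_integral_add has_integral_mult_right iA iB iP)
  have pw: "fst (WW (s, t)) * snd (d1 L (\<lambda>s. WW (s, t)) s) - fst (d1 L (\<lambda>s. WW (s, t)) s) * snd (WW (s, t))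
      = 2 * kA (s, t) + 2 * hh t * kB (s, t) - hh t * Pp' s" if s: "s \<in> {0..2*L}" for s
    unfolding dW(1)[OF t s] WE[OF s t]
    by (simp add: EE_def ee1_def kA_def kB_def Pp'_def algebra_simps; simp add: field_simps)
  have "integral {0..2*L} (\<lambda>s. fst (WW (s, t)) * snd (d1 L (\<lambda>s. WW (s, t)) s) - fst (d1 L (\<lambda>s. WW (s, t)) s) * snd (WW (s, t)))
      = integral {0..2*L} (\<lambda>s. 2 * kA (s, t) + 2 * hh t * kB (s, t) - hh t * Pp' s)"
    by (rule integral_cong) (rule pw)
  also have "\<dots> = 2 * aa t + 2 * hh t * bb t" using integral_unique[OF iAll] by simp
  finally have "area L (\<lambda>s. WW (s, t)) = aa t + hh t * bb t" by (simp add: area_def)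
  also have "\<dots> = area L \<gamma>" using bnz by (simp add: hh_def)
  finally show ?thesis .
qed

lemma vel_W: assumes s: "s \<in> {0..2*L}" shows "velocity WW tW s = velocity V tV s"
proof -
  have m0: "(s, 0) \<in> UU" using UU_mem2[OF s zero_J0] .
  have h: "(hh has_vector_derivative 0) (at 0)"
    using hh_deriv by (simp add: has_real_derivative_iff_has_vector_derivative)
  have c: "((\<lambda>\<tau>. (hh \<tau> * eta s, 0::real)) has_vector_derivative (0 * eta s, 0)) (at 0)"
    by (rule has_vector_derivative_Pair[OF bounded_linear.has_vector_derivative[OF bounded_linear_mult_left h] has_vector_derivative_const])
  have "((\<lambda>\<tau>. G (s, \<tau>) + (hh \<tau> * eta s, 0)) has_vector_derivative Dt G (s, 0) + (0 * eta s, 0)) (at 0)"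
    by (rule has_vector_derivative_add[OF hG_t[OF m0] c])
  then have "((\<lambda>\<tau>. G (s, \<tau>) + (hh \<tau> * eta s, 0)) has_vector_derivative Dt G (s, 0)) (at 0 within {-tW..tW})"
    by (simp add: zero_prod_def[symmetric] has_vector_derivative_at_within)
  then have "((\<lambda>\<tau>. WW (s, \<tau>)) has_vector_derivative Dt G (s, 0)) (at 0 within {-tW..tW})"
  proof (rule has_vector_derivative_transform[rotated 2])
    show "0 \<in> {-tW..tW}" using tW by simp
    fix \<tau> assume "\<tau> \<in> {-tW..tW}"
    then show "WW (s, \<tau>) = G (s, \<tau>) + (hh \<tau> * eta s, 0)" using WE[OF s, of \<tau>] by (simp add: EE_def abs_le_iff)
  qed
  then have "velocity WW tW s = Dt G (s, 0)" unfolding velocity_def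
    by (rule vector_derivative_within_closed_interval[rotated 2]) (use tW in auto)
  then show ?thesis using velV[OF s] by simp
qed

lemma acc_W: assumes s: "s \<in> {0..L/2} \<union> {3*L/2..2*L}"
  shows "acceleration WW tW s = acceleration V tV s"
proof -
  have s2: "s \<in> {0..2*L}" using s L by auto
  have "eta s = 0" using s by (intro eta_zero) auto
  then have "(\<lambda>\<tau>. WW (s, \<tau>)) = (\<lambda>\<tau>. V (s, \<tau>))" by (simp add: WW_def zero_prod_def[symmetric])
  then have "acceleration WW tW s = acceleration V tW s" by (simp add: acceleration_def)
  also have "\<dots> = Dt (Dt G) (s, 0)" by (rule accel_V[OF tW(1) _ s2]) (use tW_tV in simp)
  also have "\<dots> = acceleration V tV s" by (rule accel_V[OF tV _ s2, symmetric]) simp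
  finally show ?thesis .
qed

lemma final3: "admissible_variation L x0 \<gamma> WW tW \<and> area_preserving L \<gamma> WW tW \<and>
           (\<forall>s\<in>{0..2*L}. velocity WW tW s = velocity V tV s) \<and>
           (\<forall>s\<in>{0..L/2} \<union> {3*L/2..2*L}. acceleration WW tW s = acceleration V tV s)"
proof (intro conjI ballI)
  show "admissible_variation L x0 \<gamma> WW tW" by (rule av_W)
  show "area_preserving L \<gamma> WW tW" unfolding area_preserving_def
    by (intro ballI area_W) auto
next
  fix s assume "s \<in> {0..2*L}" then show "velocity WW tW s = velocity V tV s" by (rule vel_W)
next
  fix s assume "s \<in> {0..L/2} \<union> {3*L/2..2*L}" then show "acceleration WW tW s = acceleration V tV s" by (rule acc_W)
qed

end

context mt begin

lemma final: "\<exists>W tW. admissible_variation L x0 \<gamma> W tW \<and> area_preserving L \<gamma> W tW \<and>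
           (\<forall>s\<in>{0..2*L}. velocity W tW s = velocity V tV s) \<and>
           (\<forall>s\<in>{0..L/2} \<union> {3*L/2..2*L}. acceleration W tW s = acceleration V tV s)"
proof -
  obtain tau where tau: "0 < tau" "tau \<le> tV" "\<And>t. \<bar>t\<bar> < tau \<Longrightarrow> bb t > 0" using tau_exists by blast
  have m2: "mt2 L x0 tV d \<gamma> V G tau"
    by (rule mt2.intro[OF mt_axioms mt2_axioms.intro[OF tau]])
  interpret m2: mt2 L x0 tV d \<gamma> V G tau by (rule m2)
  from m2.curv_persist obtain \<delta>c where dc: "\<delta>c > 0" "\<delta>c \<le> m2.T"
    "\<And>s t. s \<in> {0..2*L} \<Longrightarrow> \<bar>t\<bar> \<le> \<delta>c \<Longrightarrow> inner (ee1 (s, t)) (perp (ee2 (s, t))) > 0"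
    by blast
  from m2.inj_persist2 obtain \<delta>i where di: "\<delta>i > 0" "\<delta>i \<le> m2.T" "\<And>t. \<bar>t\<bar> \<le> \<delta>i \<Longrightarrow> inj_on (\<lambda>s. EE (s, t)) {0..2*L}"
    by blast
  have a1: "0 < min \<delta>c \<delta>i" using dc(1) di(1) by simp
  have a2: "min \<delta>c \<delta>i \<le> m2.T" using dc(2) by simp
  have a3: "inner (ee1 (s, t)) (perp (ee2 (s, t))) > 0" if "s \<in> {0..2*L}" "\<bar>t\<bar> \<le> min \<delta>c \<delta>i" for s t
    using dc(3)[OF that(1)] that(2) by simp
  have a4: "inj_on (\<lambda>s. EE (s, t)) {0..2*L}" if "\<bar>t\<bar> \<le> min \<delta>c \<delta>i" for t
    using di(3) that by simp
  have m3: "mt3 L x0 tV d \<gamma> V G tau (min \<delta>c \<delta>i)"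
    by (rule mt3.intro[OF m2 mt3_axioms.intro[OF a1 a2 a3 a4]])
  interpret m3: mt3 L x0 tV d \<gamma> V G tau "min \<delta>c \<delta>i" by (rule m3)
  show ?thesis by (intro exI[of _ WW] exI[of _ "min \<delta>c \<delta>i"]) (rule m3.final3)
qed

end

theorem mainTheorem4:
  fixes x0 L tV :: real and \<gamma> :: "real \<Rightarrow> real \<times> real" and V :: "real \<times> real \<Rightarrow> real \<times> real"
  assumes "x0 > 0" and "L > 0"
    and "admissible L x0 \<gamma>" and "arclength_param L \<gamma>"
    and "admissible_variation L x0 \<gamma> V tV"
    and "first_order_area_preserving L \<gamma> V tV"
  shows "\<exists>W tW. admissible_variation L x0 \<gamma> W tW \<and> area_preserving L \<gamma> W tW \<and>
           (\<forall>s\<in>{0..2*L}. velocity W tW s = velocity V tV s) \<and>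
           (\<forall>s\<in>{0..L/2} \<union> {3*L/2..2*L}. acceleration W tW s = acceleration V tV s)"
proof -
  have tV: "tV > 0" using assms(5) unfolding admissible_variation_def by (elim conjE)
  have sm: "smooth_on_set ({0..2*L} \<times> {-tV..tV}) V" using assms(5) unfolding admissible_variation_def by (elim conjE)
  then obtain U0 G where U0: "open U0" "{0..2*L} \<times> {-tV..tV} \<subseteq> U0" "Cinf_on U0 G"
      "\<forall>p\<in>{0..2*L} \<times> {-tV..tV}. G p = V p"
    unfolding smooth_on_set_def by (elim exE conjE) blast
  have K: "compact ({0..2*L} \<times> {-tV..tV})" by (intro compact_Times compact_Icc)
  obtain \<epsilon> where eps: "\<epsilon> > 0" "(\<Union>x\<in>{0..2*L} \<times> {-tV..tV}. ball x \<epsilon>) \<subseteq> U0"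
    by (rule compact_subset_open_imp_ball_epsilon_subset[OF K U0(1,2)])
  define d where "d = \<epsilon> / 2"
  have d: "d > 0" using eps by (simp add: d_def)
  have sub: "{-d<..<2*L+d} \<times> {-tV<..<tV} \<subseteq> U0"
  proof (rule subsetI)
    fix p assume "p \<in> {-d<..<2*L+d} \<times> {-tV<..<tV}"
    then obtain s t where p: "p = (s, t)" "s \<in> {-d<..<2*L+d}" "t \<in> {-tV<..<tV}" by blast
    define s' where "s' = max 0 (min s (2*L))"
    have s'1: "0 \<le> s'" "s' \<le> 2*L" using assms(2) by (simp_all add: s'_def)
    have s'2: "\<bar>s' - s\<bar> < \<epsilon>"
    proof (cases "s < 0")
      case True then have "s' = 0" using assms(2) by (simp add: s'_def)
      then show ?thesis using True p(2) d_def eps(1) by simp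
    next
      case False
      show ?thesis
      proof (cases "s > 2*L")
        case True then have "s' = 2*L" using assms(2) by (simp add: s'_def)
        then show ?thesis using True p(2) d_def eps(1) by simp
      next
        case False2: False
        then have "s' = s" using False by (simp add: s'_def)
        then show ?thesis using eps(1) by simp
      qed
    qed
    have k: "(s', t) \<in> {0..2*L} \<times> {-tV..tV}" using s'1 p(3) by simp
    have "dist (s', t) (s, t) = \<bar>s' - s\<bar>" by (simp add: dist_Pair_Pair dist_real_def)
    then have "(s, t) \<in> ball (s', t) \<epsilon>" using s'2 by simp
    then show "p \<in> U0" using eps(2) k p(1) by blast
  qed
  have oU: "open ({-d<..<2*L+d} \<times> {-tV<..<tV})" by (intro open_Times) simp_all
  have GCk: "Ck_on n ({-d<..<2*L+d} \<times> {-tV<..<tV}) G" for n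
  proof -
    have "Ck_on n U0 G" using U0(3) unfolding Cinf_on_def by (elim conjE) (rule spec)
    then show ?thesis by (rule Ck_subset[OF _ oU sub])
  qed
  have GV: "G (s, t) = V (s, t)" if "s \<in> {0..2*L}" "t \<in> {-tV..tV}" for s t
    using U0(4) that by blast
  have "mt L x0 tV d \<gamma> V G"
    by (rule mt.intro[OF assms(2) assms(1) d assms(3) assms(4) assms(5) assms(6) GCk GV])
  then show ?thesis by (rule mt.final)
qed


end
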